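(* Let $\Gamma$ be a regular rooted metric tree with root $o$, of infinite height (i.e. $\sup_{x\in\Gamma}|x|=\infty$) and of finite reduced height, i.e. $$\int_0^\infty \frac{dt}{g_0(t)}<\infty .$$ Let $\psi$ be a measurable, non-negative function on $\mathbb{R}_+$. Then there exists a constant $C(\Gamma,\psi)<\infty$ such that $$\int_{\Gamma} \psi(|x|)\, |u(x)|^2 \, dx \leq C(\Gamma,\psi) \int_{\Gamma} |u'(x)|^2\, dx \quad \text{for all } u \in C_0^\infty(\Gamma_o)$$ if and only if $$M(\Gamma,\psi) := \sup_{t>0} \left( \int_0^t \psi(s)\, g_0(s)\,ds \right) \left( \int_t^\infty \frac{ds}{g_0(s)} \right) < \infty .$$ Moreover, the sharp (smallest) constant $C(\Gamma,\psi)$ in this inequality satisfies $M(\Gamma,\psi) \leq C(\Gamma,\psi) \leq 4\, M(\Gamma,\psi)$.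
   Context: $\Gamma$ is a rooted metric tree with root $o$; $|x|$ denotes the distance (along the tree) from $x\in\Gamma$ to $o$. The branching number $b(x)$ of a vertex $x$ is the number of edges emanating from $x$; it is assumed that $b(o)=1$ and $b(x)>1$ for every vertex $x\neq o$. The tree is regular: all vertices at the same distance from the root have the same branching number, and all edges emanating from these vertices have the same length. For a vertex $x$ such that the path from $o$ to $x$ contains $k+1$ vertices (endpoints included), write $t_k=|x|$ and $b_k=b(x)$; set $t_0=0$, $b_0=1$. The branching function is $g_0(t)=\#\{x\in\Gamma: |x|=t\}$, equivalently $g_0(t)=b_0b_1\cdots b_k$ for $t_k<t\le t_{k+1}$. $\Gamma_o:=\Gamma\cup\{o\}$, and $C_0^\infty(\Gamma_o)$ denotes the class of (continuous on $\Gamma$, edgewise) infinitely smooth functions on $\Gamma_o$ whose support is a bounded subset of $\Gamma_o$; such functions need not vanish at the root. Integration over $\Gamma$ is with respect to arc length, and $u'$ is the derivative along the edges. *)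

theory Defs
  imports "HOL-Analysis.Analysis"
begin

text \<open>A regular rooted metric tree is encoded by the heights T k = t_k of the
vertices of generation k (T k = infinity means: there is no vertex of generation k,
the edges of generation k-1 are infinite rays) and the branching numbers b k = b_k.\<close>

definition reg_tree :: "(nat \<Rightarrow> ereal) \<Rightarrow> (nat \<Rightarrow> nat) \<Rightarrow> bool" where
  "reg_tree T b \<longleftrightarrow> T 0 = 0 \<and> (\<forall>k. T k < \<infinity> \<longrightarrow> T k < T (Suc k))
     \<and> (\<forall>k. T k = \<infinity> \<longrightarrow> T (Suc k) = \<infinity>)
     \<and> b 0 = 1 \<and> (\<forall>k. 1 \<le> k \<longrightarrow> T k < \<infinity> \<longrightarrow> 2 \<le> b k)"

definition g0 :: "(nat \<Rightarrow> ereal) \<Rightarrow> (nat \<Rightarrow> nat) \<Rightarrow> real \<Rightarrow> real" where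
  "g0 T b s = (\<Prod>i\<in>{i. T i < ereal s}. real (b i))"

text \<open>Points of the tree at distance s > 0 from the root are the pairs (s, w) with
w in level T b s: w = [w_0,...,w_k] (t_k < s <= t_{k+1}) records which edge is taken at
each vertex of the path from the root.  The root is the pair (0, []).\<close>
definition level :: "(nat \<Rightarrow> ereal) \<Rightarrow> (nat \<Rightarrow> nat) \<Rightarrow> real \<Rightarrow> nat list set" where
  "level T b s = {w. length w = card {i. T i < ereal s} \<and> (\<forall>i<length w. w ! i < b i)}"

definition smooth_fun :: "(real \<Rightarrow> real) \<Rightarrow> bool" where
  "smooth_fun f \<longleftrightarrow> (\<forall>n x. ((deriv ^^ n) f) differentiable (at x))"

text \<open>u in C_0^infinity(Gamma_o): on every closed edge [t_k, t_{k+1}] (whose lower endpoint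
is the parent vertex (t_k, butlast w)) u is the restriction of a C^infinity function
(this also encodes continuity at the vertices and at the root), and u has bounded support.\<close>
definition C0inf :: "(nat \<Rightarrow> ereal) \<Rightarrow> (nat \<Rightarrow> nat) \<Rightarrow> (real \<Rightarrow> nat list \<Rightarrow> real) \<Rightarrow> bool" where
  "C0inf T b u \<longleftrightarrow>
     (\<forall>k w. T k < \<infinity> \<longrightarrow> length w = Suc k \<longrightarrow> (\<forall>i<length w. w ! i < b i) \<longrightarrow>
        (\<exists>f. smooth_fun f \<and>
           (\<forall>s. T k \<le> ereal s \<and> ereal s \<le> T (Suc k) \<longrightarrow>
                 f s = (if ereal s = T k then u s (butlast w) else u s w))))
   \<and> (\<exists>R. \<forall>s w. R < s \<longrightarrow> w \<in> level T b s \<longrightarrow> u s w = 0)"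

text \<open>Integral over Gamma w.r.t. arc length of a non-negative function F:
 integral over s > 0 of the sum of F over the finitely many points at distance s.\<close>
definition tree_int :: "(nat \<Rightarrow> ereal) \<Rightarrow> (nat \<Rightarrow> nat) \<Rightarrow> (real \<Rightarrow> nat list \<Rightarrow> real) \<Rightarrow> ennreal" where
  "tree_int T b F = (\<integral>\<^sup>+ s\<in>{0<..}. ennreal (\<Sum>w\<in>level T b s. F s w) \<partial>lborel)"

definition Mconst :: "(nat \<Rightarrow> ereal) \<Rightarrow> (nat \<Rightarrow> nat) \<Rightarrow> (real \<Rightarrow> real) \<Rightarrow> ennreal" where
  "Mconst T b \<psi> = (SUP t\<in>{0<..}.
      (\<integral>\<^sup>+ s\<in>{0<..t}. ennreal (\<psi> s * g0 T b s) \<partial>lborel)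
    * (\<integral>\<^sup>+ s\<in>{t<..}. ennreal (1 / g0 T b s) \<partial>lborel))"

definition hardy_ineq :: "(nat \<Rightarrow> ereal) \<Rightarrow> (nat \<Rightarrow> nat) \<Rightarrow> (real \<Rightarrow> real) \<Rightarrow> ennreal \<Rightarrow> bool" where
  "hardy_ineq T b \<psi> C \<longleftrightarrow> (\<forall>u. C0inf T b u \<longrightarrow>
      tree_int T b (\<lambda>s w. \<psi> s * (u s w)\<^sup>2)
        \<le> C * tree_int T b (\<lambda>s w. (deriv (\<lambda>r. u r w) s)\<^sup>2))"

definition sharp_const :: "(nat \<Rightarrow> ereal) \<Rightarrow> (nat \<Rightarrow> nat) \<Rightarrow> (real \<Rightarrow> real) \<Rightarrow> ennreal" where
  "sharp_const T b \<psi> = Inf {C. hardy_ineq T b \<psi> C}"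

end

theory Submission
  imports Defs "HOL-Computational_Algebra.Polynomial"
begin

definition words :: "(nat \<Rightarrow> nat) \<Rightarrow> nat \<Rightarrow> nat list set" where
  "words b n = {w. length w = n \<and> (\<forall>i<n. w ! i < b i)}"

lemma words_Suc: "words b (Suc n) = (\<lambda>(v,i). v @ [i]) ` (words b n \<times> {..<b n})"
proof
  show "words b (Suc n) \<subseteq> (\<lambda>(v,i). v @ [i]) ` (words b n \<times> {..<b n})"
  proof
    fix w assume w: "w \<in> words b (Suc n)"
    then have l: "length w = Suc n" by (simp add: words_def)
    then have "w = butlast w @ [last w]" using l by (cases w rule: rev_cases) auto
    moreover have "butlast w \<in> words b n" using w l by (auto simp: words_def nth_butlast)
    moreover have "last w < b n"
    proof -
      have "w \<noteq> []" using l by auto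
      then have "last w = w ! n" using l by (simp add: last_conv_nth)
      then show ?thesis using w l by (simp add: words_def)
    qed
    ultimately show "w \<in> (\<lambda>(v,i). v @ [i]) ` (words b n \<times> {..<b n})" by force
  qed
next
  show "(\<lambda>(v,i). v @ [i]) ` (words b n \<times> {..<b n}) \<subseteq> words b (Suc n)"
    by (auto simp: words_def nth_append less_Suc_eq)
qed

lemma words_finite_card: "finite (words b n) \<and> card (words b n) = (\<Prod>i<n. b i)"
proof (induction n)
  case 0
  have "words b 0 = {[]}" by (auto simp: words_def)
  then show ?case by simp
next
  case (Suc n)
  have inj: "inj_on (\<lambda>(v,i). v @ [i]) (words b n \<times> {..<b n})"
    by (auto simp: inj_on_def)
  show ?case using Suc unfolding words_Suc
    by (simp add: card_image[OF inj] card_cartesian_product)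
qed

lemma emeasure_Ioi_inf: "emeasure lborel {a<..} = (\<infinity>::ennreal)" for a :: real
proof (rule ccontr)
  assume "emeasure lborel {a<..} \<noteq> \<infinity>"
  then have "emeasure lborel {a<..} < top" by (simp add: less_top)
  then obtain n where n: "emeasure lborel {a<..} < of_nat n" using ennreal_Ex_less_of_nat by blast
  have "emeasure lborel {a<..a + real n} \<le> emeasure lborel {a<..}"
    by (rule emeasure_mono) auto
  then have "ennreal (real n) \<le> emeasure lborel {a<..}" by simp
  with n show False by (simp add: ennreal_of_nat_eq_real_of_nat)
qed

locale rtree =
  fixes T :: "nat \<Rightarrow> ereal" and b :: "nat \<Rightarrow> nat"
  assumes reg: "reg_tree T b"
    and sup: "(SUP k. T k) = \<infinity>"
    and fin: "(\<integral>\<^sup>+ s\<in>{0<..}. ennreal (1 / g0 T b s) \<partial>lborel) < \<infinity>"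
begin

lemma T0: "T 0 = 0" using reg by (simp add: reg_tree_def)
lemma Tinc: "T k < \<infinity> \<Longrightarrow> T k < T (Suc k)" using reg by (simp add: reg_tree_def)
lemma Tinf: "T k = \<infinity> \<Longrightarrow> T (Suc k) = \<infinity>" using reg by (simp add: reg_tree_def)
lemma b0: "b 0 = 1" using reg by (simp add: reg_tree_def)
lemma b2: "1 \<le> k \<Longrightarrow> T k < \<infinity> \<Longrightarrow> 2 \<le> b k" using reg by (simp add: reg_tree_def)

lemma Tinf_le: "T k = \<infinity> \<Longrightarrow> k \<le> j \<Longrightarrow> T j = \<infinity>"
  by (induction j) (auto simp: le_Suc_eq Tinf)

lemma Tmono_fin: "T j < \<infinity> \<Longrightarrow> i \<le> j \<Longrightarrow> T i \<le> T j"
proof (induction j)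
  case 0 then show ?case by simp
next
  case (Suc j)
  have "T j < \<infinity>"
  proof (rule ccontr)
    assume "\<not> T j < \<infinity>"
    then have "T (Suc j) = \<infinity>" using Tinf by simp
    with Suc.prems(1) show False by simp
  qed
  then show ?case using Suc Tinc[of j] by (auto simp: le_Suc_eq)
qed

lemma T_nonneg: "T j < \<infinity> \<Longrightarrow> 0 \<le> T j"
  using Tmono_fin[of j 0] T0 by simp

lemma all_fin: "T k < \<infinity>"
proof (rule ccontr)
  assume "\<not> T k < \<infinity>"
  then have Tk: "T k = \<infinity>" by simp
  define k0 where "k0 = (LEAST k. T k = \<infinity>)"
  have Tk0: "T k0 = \<infinity>" using Tk unfolding k0_def by (rule LeastI)
  have k0pos: "k0 \<noteq> 0"
  proof
    assume "k0 = 0" with Tk0 T0 show False by simp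
  qed
  then obtain m where m: "k0 = Suc m" by (cases k0) auto
  have "T m \<noteq> \<infinity>" using not_less_Least[of m "\<lambda>k. T k = \<infinity>"] m k0_def by simp
  then have Tm: "T m < \<infinity>" by (cases "T m") auto
  obtain c where c: "T m = ereal c" using Tm T_nonneg[OF Tm] by (cases "T m") auto
  have ilt: "i < k0 \<Longrightarrow> T i \<le> ereal c" for i using Tmono_fin[OF Tm, of i] m c by simp
  have set_eq: "{i. T i < ereal s} = {..<k0}" if cs: "c < s" for s
  proof
    show "{i. T i < ereal s} \<subseteq> {..<k0}"
    proof
      fix i assume i: "i \<in> {i. T i < ereal s}"
      show "i \<in> {..<k0}"
      proof (rule ccontr)
        assume "i \<notin> {..<k0}"
        then have "T i = \<infinity>" using Tinf_le[OF Tk0, of i] by simp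
        with i show False by simp
      qed
    qed
    show "{..<k0} \<subseteq> {i. T i < ereal s}"
    proof
      fix i assume "i \<in> {..<k0}"
      then have "T i \<le> ereal c" using ilt by simp
      also have "ereal c < ereal s" using cs by simp
      finally show "i \<in> {i. T i < ereal s}" by simp
    qed
  qed
  define G where "G = (\<Prod>i<k0. real (b i))"
  have bpos: "i < k0 \<Longrightarrow> 1 \<le> b i" for i
  proof -
    assume "i < k0"
    then have "T i \<le> ereal c" using ilt by simp
    then have "T i < \<infinity>" using le_less_trans[of "T i" "ereal c" \<infinity>] by simp
    then show ?thesis using b0 b2[of i] by (cases i) auto
  qed
  have Gpos: "0 < G" unfolding G_def
  proof (rule prod_pos)
    fix a assume "a \<in> {..<k0}"
    then have "1 \<le> b a" using bpos by simp
    then show "0 < real (b a)" by simp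
  qed
  have "\<infinity> = (\<integral>\<^sup>+ s. ennreal (1/G) * indicator {max c 0<..} s \<partial>lborel)"
    using Gpos by (simp add: nn_integral_cmult ennreal_mult_top emeasure_Ioi_inf)
  also have "\<dots> \<le> (\<integral>\<^sup>+ s\<in>{0<..}. ennreal (1 / g0 T b s) \<partial>lborel)"
  proof (intro nn_integral_mono)
    fix s :: real assume "s \<in> space lborel"
    show "ennreal (1/G) * indicator {max c 0<..} s \<le> ennreal (1 / g0 T b s) * indicator {0<..} s"
    proof (cases "max c 0 < s")
      case True
      then have "g0 T b s = G" unfolding g0_def G_def using set_eq[of s] by simp
      then show ?thesis using True by simp
    qed simp
  qed
  finally show False using fin by simp
qed

definition t :: "nat \<Rightarrow> real" where "t k = real_of_ereal (T k)"

lemma T_t: "T k = ereal (t k)"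
  using all_fin[of k] T_nonneg[of k] all_fin unfolding t_def by (cases "T k") auto

lemma t0: "t 0 = 0" using T0 by (simp add: t_def)
lemma t_Suc: "t k < t (Suc k)" using Tinc[OF all_fin] by (simp add: T_t)
lemma t_mono: "strict_mono t" using t_Suc by (simp add: strict_mono_Suc_iff)
lemma t_le: "i \<le> j \<Longrightarrow> t i \<le> t j" using t_mono by (simp add: strict_mono_less_eq)
lemma t_less: "i < j \<Longrightarrow> t i < t j" using t_mono by (simp add: strict_mono_less)
lemma t_nonneg: "0 \<le> t k" using t_le[of 0 k] t0 by simp
lemma t_less_iff: "t i < t j \<longleftrightarrow> i < j" using t_mono by (simp add: strict_mono_less)
lemma t_le_iff: "t i \<le> t j \<longleftrightarrow> i \<le> j" using t_mono by (simp add: strict_mono_less_eq)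
lemma t_pos: "0 < k \<Longrightarrow> 0 < t k" using t_less[of 0 k] t0 by simp

lemma t_unbounded: "\<exists>k. R < t k"
proof (rule ccontr)
  assume "\<not> ?thesis"
  then have "\<forall>k. T k \<le> ereal R" by (auto simp: T_t not_less)
  then have "(SUP k. T k) \<le> ereal R" by (simp add: SUP_least)
  then show False using sup by simp
qed

lemma b_pos: "1 \<le> b i"
  using b0 b2[of i, OF _ all_fin] by (cases i) auto

definition gk :: "nat \<Rightarrow> real" where "gk k = (\<Prod>i<Suc k. real (b i))"

lemma gk_ge1: "1 \<le> gk k"
  unfolding gk_def using b_pos by (intro prod_ge_1) auto
lemma gk_pos: "0 < gk k" using gk_ge1[of k] by simp

lemma edge_ex: "0 < s \<Longrightarrow> \<exists>k. t k < s \<and> s \<le> t (Suc k)"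
proof -
  assume s: "0 < s"
  obtain N where N: "s \<le> t N" using t_unbounded[of s] by (auto intro: less_imp_le)
  have sub: "{k. t k < s} \<subseteq> {..<N}"
  proof
    fix k assume "k \<in> {k. t k < s}"
    then have "t k < t N" using N by simp
    then show "k \<in> {..<N}" by (simp add: t_less_iff)
  qed
  have fin: "finite {k. t k < s}" using sub by (rule finite_subset) simp
  have ne: "0 \<in> {k. t k < s}" using s t0 by simp
  define k where "k = Max {k. t k < s}"
  have "t k < s" using Max_in[OF fin] ne unfolding k_def by auto
  moreover have "s \<le> t (Suc k)"
  proof (rule ccontr)
    assume "\<not> s \<le> t (Suc k)"
    then have "Suc k \<in> {k. t k < s}" by simp
    from Max_ge[OF fin this] show False unfolding k_def by simp
  qed
  ultimately show ?thesis by blast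
qed

lemma edge_unique: "t k < s \<Longrightarrow> s \<le> t (Suc k) \<Longrightarrow> t j < s \<Longrightarrow> s \<le> t (Suc j) \<Longrightarrow> j = k"
proof -
  assume a: "t k < s" "s \<le> t (Suc k)" "t j < s" "s \<le> t (Suc j)"
  then have "t k < t (Suc j)" "t j < t (Suc k)" by simp_all
  then show "j = k" by (simp add: t_less_iff)
qed

lemma idx_set: "t k < s \<Longrightarrow> s \<le> t (Suc k) \<Longrightarrow> {i. T i < ereal s} = {..k}"
proof safe
  fix i assume "t k < s" "s \<le> t (Suc k)" "T i < ereal s"
  then have "t i < t (Suc k)" by (simp add: T_t)
  then show "i \<le> k" by (simp add: t_less_iff)
next
  fix i assume "t k < s" "i \<le> k"
  then have "t i \<le> t k" by (simp add: t_le_iff)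
  then show "T i < ereal s" using \<open>t k < s\<close> by (simp add: T_t)
qed

lemma idx_set_nonpos: "s \<le> 0 \<Longrightarrow> {i. T i < ereal s} = {}"
proof safe
  fix i assume "s \<le> 0" "T i < ereal s"
  with t_nonneg[of i] show "i \<in> {}" by (simp add: T_t)
qed

lemma g0_edge: "t k < s \<Longrightarrow> s \<le> t (Suc k) \<Longrightarrow> g0 T b s = gk k"
  by (simp add: g0_def idx_set gk_def lessThan_Suc_atMost)

lemma g0_nonpos: "s \<le> 0 \<Longrightarrow> g0 T b s = 1"
  by (simp add: g0_def idx_set_nonpos)

lemma g0_ge1: "1 \<le> g0 T b s"
proof (cases "s \<le> 0")
  case True then show ?thesis by (simp add: g0_nonpos)
next
  case False then have "0 < s" by simp
  then obtain k where "t k < s" "s \<le> t (Suc k)" using edge_ex by blast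
  then show ?thesis using g0_edge gk_ge1 by simp
qed
lemma g0_pos: "0 < g0 T b s" using g0_ge1[of s] by simp

lemma gk_mono: "i \<le> j \<Longrightarrow> gk i \<le> gk j"
  unfolding gk_def using b_pos
  by (intro prod_mono2) auto

lemma g0_mono: "mono (g0 T b)"
proof (rule monoI)
  fix x y :: real assume xy: "x \<le> y"
  show "g0 T b x \<le> g0 T b y"
  proof (cases "x \<le> 0")
    case True then show ?thesis using g0_ge1 by (simp add: g0_nonpos)
  next
    case False
    then have "0 < x" "0 < y" using xy by simp_all
    then obtain i j where i: "t i < x" "x \<le> t (Suc i)" and j: "t j < y" "y \<le> t (Suc j)"
      using edge_ex by blast
    have "t i < t (Suc j)" using i j xy by simp
    then have "i \<le> j" by (simp add: t_less_iff)
    then show ?thesis using i j g0_edge gk_mono by simp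
  qed
qed

lemma g0_meas[measurable]: "g0 T b \<in> borel_measurable borel"
  using g0_mono by (rule borel_measurable_mono)

lemma level_edge: "t k < s \<Longrightarrow> s \<le> t (Suc k) \<Longrightarrow> level T b s = words b (Suc k)"
proof -
  assume "t k < s" "s \<le> t (Suc k)"
  then have "card {i. T i < ereal s} = Suc k" by (simp add: idx_set)
  then show ?thesis unfolding level_def words_def by (intro Collect_cong) auto
qed

lemma card_words: "card (words b (Suc k)) = gk k"
  using words_finite_card[of b "Suc k"] by (simp add: gk_def)

lemma finite_words: "finite (words b n)" using words_finite_card by blast

end

lemma ftc_nn:
  fixes F f :: "real \<Rightarrow> real"
  assumes ab: "a \<le> b" and S: "finite S" and cont: "continuous_on {a..b} F"
    and der: "\<And>x. x \<in> {a<..<b} - S \<Longrightarrow> (F has_real_derivative f x) (at x)"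
    and nn: "\<And>x. x \<in> {a<..<b} \<Longrightarrow> 0 \<le> f x"
  shows "(\<integral>\<^sup>+x. ennreal (f x) * indicator {a<..<b} x \<partial>lborel) = ennreal (F b - F a)"
proof -
  define f' where "f' x = (if x \<in> {a<..<b} then f x else 0)" for x
  have "(f' has_integral (F b - F a)) {a..b}"
  proof (rule fundamental_theorem_of_calculus_interior_strong[OF S ab _ cont])
    fix x assume x: "x \<in> {a<..<b} - S"
    then have "(F has_real_derivative f' x) (at x)" using der[OF x] by (simp add: f'_def)
    then show "(F has_vector_derivative f' x) (at x)"
      by (simp add: has_real_derivative_iff_has_vector_derivative)
  qed
  then have "(\<integral>\<^sup>+x. ennreal (f' x) * indicator {a..b} x \<partial>lborel) = ennreal (F b - F a)"
    by (rule nn_integral_has_integral_lebesgue'[rotated]) (use nn in \<open>auto simp: f'_def\<close>)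
  moreover have "(\<lambda>x. ennreal (f' x) * indicator {a..b} x) = (\<lambda>x. ennreal (f x) * indicator {a<..<b} x)"
    by (auto simp: f'_def indicator_def fun_eq_iff)
  ultimately show ?thesis by simp
qed

lemma nn_integral_Ioc_const:
  "x \<le> y \<Longrightarrow> 0 \<le> c \<Longrightarrow> (\<integral>\<^sup>+z. ennreal c * indicator {x<..y} z \<partial>lborel) = ennreal (c * (y - x))"
  by (simp add: nn_integral_cmult ennreal_mult)

context rtree
begin

lemma edge_ex2: "0 \<le> x \<Longrightarrow> \<exists>k. t k \<le> x \<and> x < t (Suc k)"
proof -
  assume x: "0 \<le> x"
  obtain N where N: "x < t N" using t_unbounded by blast
  have fin: "finite {k. t k \<le> x}"
    by (rule finite_subset[of _ "{..<N}"]) (use N in \<open>auto simp: t_less_iff[symmetric]\<close>)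
  have ne: "0 \<in> {k. t k \<le> x}" using x t0 by simp
  define k where "k = Max {k. t k \<le> x}"
  have "t k \<le> x" using Max_in[OF fin] ne unfolding k_def by auto
  moreover have "x < t (Suc k)"
  proof (rule ccontr)
    assume "\<not> x < t (Suc k)"
    then have "Suc k \<in> {k. t k \<le> x}" by simp
    from Max_ge[OF fin this] show False unfolding k_def by simp
  qed
  ultimately show ?thesis by blast
qed

definition Vf :: "real \<Rightarrow> real" where
  "Vf s = enn2real (\<integral>\<^sup>+x\<in>{s<..}. ennreal (1 / g0 T b x) \<partial>lborel)"

lemma V_fin: "0 \<le> s \<Longrightarrow> (\<integral>\<^sup>+x\<in>{s<..}. ennreal (1 / g0 T b x) \<partial>lborel) < \<infinity>"
proof -
  assume s: "0 \<le> s"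
  have "(\<integral>\<^sup>+x\<in>{s<..}. ennreal (1 / g0 T b x) \<partial>lborel) \<le> (\<integral>\<^sup>+x\<in>{0<..}. ennreal (1 / g0 T b x) \<partial>lborel)"
    using s by (intro nn_integral_mono) (auto simp: indicator_def)
  then show ?thesis using fin by (rule le_less_trans)
qed

lemma V_eq: "0 \<le> s \<Longrightarrow> (\<integral>\<^sup>+x\<in>{s<..}. ennreal (1 / g0 T b x) \<partial>lborel) = ennreal (Vf s)"
  unfolding Vf_def using V_fin by (simp add: less_top)

lemma Vf_nonneg: "0 \<le> Vf s" by (simp add: Vf_def)

lemma V_split: "0 \<le> x \<Longrightarrow> x \<le> y \<Longrightarrow>
   ennreal (Vf x) = (\<integral>\<^sup>+z\<in>{x<..y}. ennreal (1 / g0 T b z) \<partial>lborel) + ennreal (Vf y)"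
proof -
  assume xy: "0 \<le> x" "x \<le> y"
  have "ennreal (Vf x) = (\<integral>\<^sup>+z. ennreal (1 / g0 T b z) * indicator {x<..y} z + ennreal (1 / g0 T b z) * indicator {y<..} z \<partial>lborel)"
    using xy by (subst V_eq[symmetric]) (auto intro!: nn_integral_cong simp: indicator_def)
  also have "\<dots> = (\<integral>\<^sup>+z\<in>{x<..y}. ennreal (1 / g0 T b z) \<partial>lborel) + (\<integral>\<^sup>+z\<in>{y<..}. ennreal (1 / g0 T b z) \<partial>lborel)"
    by (rule nn_integral_add) auto
  also have "\<dots> = (\<integral>\<^sup>+z\<in>{x<..y}. ennreal (1 / g0 T b z) \<partial>lborel) + ennreal (Vf y)"
    using xy by (simp add: V_eq)
  finally show ?thesis .
qed

lemma V_mono: "0 \<le> x \<Longrightarrow> x \<le> y \<Longrightarrow> Vf y \<le> Vf x"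
proof -
  assume xy: "0 \<le> x" "x \<le> y"
  have "ennreal (Vf y) \<le> (\<integral>\<^sup>+z\<in>{x<..y}. ennreal (1 / g0 T b z) \<partial>lborel) + ennreal (Vf y)"
    by (rule add_increasing) simp_all
  then have "ennreal (Vf y) \<le> ennreal (Vf x)" using V_split[OF xy] by simp
  then show ?thesis using Vf_nonneg[of x] by (simp add: ennreal_le_iff)
qed

lemma V_edge: "t k \<le> x \<Longrightarrow> x \<le> y \<Longrightarrow> y \<le> t (Suc k) \<Longrightarrow> Vf x = Vf y + (y - x) / gk k"
proof -
  assume xy: "t k \<le> x" "x \<le> y" "y \<le> t (Suc k)"
  have x0: "0 \<le> x" using xy t_nonneg[of k] by simp
  have "(\<integral>\<^sup>+z\<in>{x<..y}. ennreal (1 / g0 T b z) \<partial>lborel) = (\<integral>\<^sup>+z. ennreal (1 / gk k) * indicator {x<..y} z \<partial>lborel)"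
  proof (intro nn_integral_cong)
    fix z :: real assume "z \<in> space lborel"
    show "ennreal (1 / g0 T b z) * indicator {x<..y} z = ennreal (1 / gk k) * indicator {x<..y} z"
    proof (cases "z \<in> {x<..y}")
      case True
      then have "g0 T b z = gk k" using xy by (intro g0_edge) auto
      then show ?thesis by simp
    qed simp
  qed
  also have "\<dots> = ennreal ((1 / gk k) * (y - x))"
    using xy gk_pos[of k] by (intro nn_integral_Ioc_const) auto
  finally have "ennreal (Vf x) = ennreal ((y - x) / gk k) + ennreal (Vf y)"
    using V_split[OF x0 xy(2)] by simp
  then have "ennreal (Vf x) = ennreal ((y - x) / gk k + Vf y)"
    using xy gk_pos[of k] Vf_nonneg[of y] by (simp add: ennreal_plus)
  then show ?thesis using Vf_nonneg[of x] xy gk_pos[of k] Vf_nonneg[of y]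
    by (subst (asm) ennreal_inj) auto
qed

lemma V_lip: "0 \<le> x \<Longrightarrow> x \<le> y \<Longrightarrow> Vf x - Vf y \<le> y - x"
proof -
  assume xy: "0 \<le> x" "x \<le> y"
  have "(\<integral>\<^sup>+z\<in>{x<..y}. ennreal (1 / g0 T b z) \<partial>lborel) \<le> (\<integral>\<^sup>+z. ennreal 1 * indicator {x<..y} z \<partial>lborel)"
  proof (intro nn_integral_mono)
    fix z :: real assume "z \<in> space lborel"
    have "1 / g0 T b z \<le> 1" using g0_ge1[of z] by simp
    then show "ennreal (1 / g0 T b z) * indicator {x<..y} z \<le> ennreal 1 * indicator {x<..y} z"
      by (simp add: indicator_def)
  qed
  also have "\<dots> = ennreal (y - x)" using xy nn_integral_Ioc_const[of x y 1] by simp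
  finally have "ennreal (Vf x) \<le> ennreal (y - x) + ennreal (Vf y)"
    using V_split[OF xy] by (metis add_right_mono)
  moreover have "ennreal (y - x) + ennreal (Vf y) = ennreal (y - x + Vf y)"
    using xy Vf_nonneg[of y] by (intro ennreal_plus[symmetric]) auto
  ultimately have le: "ennreal (Vf x) \<le> ennreal (y - x + Vf y)" by (rule ord_le_eq_trans)
  have nn: "0 \<le> y - x + Vf y" using xy Vf_nonneg[of y] by simp
  have "Vf x \<le> y - x + Vf y" using iffD1[OF ennreal_le_iff[OF nn] le] .
  then show ?thesis by simp
qed

lemma V_cont: "continuous_on {0..} Vf"
proof (rule continuous_onI)
  fix x e :: real assume x: "x \<in> {0..}" and e: "0 < e"
  show "\<exists>d>0. \<forall>x'\<in>{0..}. dist x' x < d \<longrightarrow> dist (Vf x') (Vf x) \<le> e"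
  proof (intro exI[of _ e] conjI ballI impI e)
    fix y assume y: "y \<in> {0..}" "dist y x < e"
    show "dist (Vf y) (Vf x) \<le> e"
    proof (cases "x \<le> y")
      case True
      then show ?thesis using V_lip[of x y] V_mono[of x y] x y by (simp add: dist_real_def)
    next
      case False
      then show ?thesis using V_lip[of y x] V_mono[of y x] x y by (simp add: dist_real_def)
    qed
  qed
qed

lemma V_pos: "0 \<le> x \<Longrightarrow> 0 < Vf x"
proof -
  assume x: "0 \<le> x"
  then obtain k where k: "t k \<le> x" "x < t (Suc k)" using edge_ex2 by blast
  then have "Vf x = Vf (t (Suc k)) + (t (Suc k) - x) / gk k" by (intro V_edge) auto
  moreover have "0 < (t (Suc k) - x) / gk k" using k gk_pos[of k] by simp
  ultimately show ?thesis using Vf_nonneg[of "t (Suc k)"] by simp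
qed

lemma V_deriv: "t k < x \<Longrightarrow> x < t (Suc k) \<Longrightarrow> (Vf has_real_derivative (- 1 / gk k)) (at x)"
proof -
  assume x: "t k < x" "x < t (Suc k)"
  let ?L = "\<lambda>y. Vf x - (y - x) / gk k"
  have L: "(?L has_real_derivative (- 1 / gk k)) (at x)"
    using gk_pos[of k] by (auto intro!: derivative_eq_intros)
  show ?thesis
  proof (rule has_field_derivative_transform_within_open[OF L, of "{t k<..<t (Suc k)}"])
    show "x \<in> {t k<..<t (Suc k)}" using x by simp
    fix y assume y: "y \<in> {t k<..<t (Suc k)}"
    show "?L y = Vf y"
    proof (cases "x \<le> y")
      case True then show ?thesis using V_edge[of k x y] x y by auto
    next
      case False then show ?thesis using V_edge[of k y x] x y gk_pos[of k] by (auto simp: field_simps)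
    qed
  qed simp
qed

lemma V_tends: "0 < e \<Longrightarrow> \<exists>R. \<forall>x\<ge>R. Vf x < e"
proof -
  assume e: "0 < e"
  define I where "I = (\<integral>\<^sup>+x\<in>{0<..}. ennreal (1 / g0 T b x) \<partial>lborel)"
  have I: "I = ennreal (Vf 0)" unfolding I_def using V_eq[of 0] by simp
  have "(SUP n. (\<integral>\<^sup>+x. ennreal (1 / g0 T b x) * indicator {0<..real n} x \<partial>lborel)) =
        (\<integral>\<^sup>+x. (SUP n. ennreal (1 / g0 T b x) * indicator {0<..real n} x) \<partial>lborel)"
  proof (rule nn_integral_monotone_convergence_SUP[symmetric])
    show "incseq (\<lambda>n x. ennreal (1 / g0 T b x) * indicator {0<..real n} x)"
      by (intro incseq_SucI le_funI) (auto simp: indicator_def)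
  qed auto
  also have "(\<lambda>x. (SUP n. ennreal (1 / g0 T b x) * indicator {0<..real n} x)) = (\<lambda>x. ennreal (1 / g0 T b x) * indicator {0<..} x)"
  proof
    fix x :: real
    show "(SUP n. ennreal (1 / g0 T b x) * indicator {0<..real n} x) = ennreal (1 / g0 T b x) * indicator {0<..} x"
    proof (cases "0 < x")
      case True
      obtain n :: nat where n: "x \<le> real n" using real_arch_simple by blast
      show ?thesis
      proof (rule antisym)
        show "(SUP n. ennreal (1 / g0 T b x) * indicator {0<..real n} x) \<le> ennreal (1 / g0 T b x) * indicator {0<..} x"
          by (intro SUP_least) (auto simp: indicator_def)
        show "ennreal (1 / g0 T b x) * indicator {0<..} x \<le> (SUP n. ennreal (1 / g0 T b x) * indicator {0<..real n} x)"
          using True n by (intro SUP_upper2[of n]) (auto simp: indicator_def)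
      qed
    qed (simp add: indicator_def)
  qed
  finally have sup: "(SUP n. (\<integral>\<^sup>+x. ennreal (1 / g0 T b x) * indicator {0<..real n} x \<partial>lborel)) = ennreal (Vf 0)"
    using I unfolding I_def by simp
  have "ennreal (Vf 0 - e) < ennreal (Vf 0)"
    using e V_pos[of 0] by (simp add: ennreal_lessI)
  then obtain n where n: "ennreal (Vf 0 - e) < (\<integral>\<^sup>+x. ennreal (1 / g0 T b x) * indicator {0<..real n} x \<partial>lborel)"
    unfolding sup[symmetric] by (auto simp: less_SUP_iff)
  have split: "ennreal (Vf 0) = (\<integral>\<^sup>+x. ennreal (1 / g0 T b x) * indicator {0<..real n} x \<partial>lborel) + ennreal (Vf (real n))"
    using V_split[of 0 "real n"] by simp
  define In where "In = (\<integral>\<^sup>+x. ennreal (1 / g0 T b x) * indicator {0<..real n} x \<partial>lborel)"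
  have "In \<le> In + ennreal (Vf (real n))" by (rule add_increasing2) simp_all
  then have "In \<le> ennreal (Vf 0)" using split unfolding In_def by simp
  then obtain i where i: "In = ennreal i" "0 \<le> i" by (cases In) (auto simp: top_unique)
  have "ennreal (Vf 0) = ennreal (i + Vf (real n))" using split i unfolding In_def
    by (simp add: ennreal_plus Vf_nonneg)
  then have eq: "Vf 0 = i + Vf (real n)" using i Vf_nonneg[of "real n"] Vf_nonneg[of 0]
    by (subst (asm) ennreal_inj) auto
  have "ennreal (Vf 0 - e) < ennreal i" using n i unfolding In_def by simp
  then have "Vf 0 - e < i" using i by (cases "0 \<le> Vf 0 - e") (auto simp: ennreal_less_iff)
  then have "Vf (real n) < e" using eq by simp
  then show ?thesis using V_mono[of "real n"] by (intro exI[of _ "real n"]) (auto intro: le_less_trans)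
qed

end

lemma opt_lemma:
  fixes q A :: ennreal and c :: real
  assumes c: "0 < c" and H: "\<And>l. 0 < l \<Longrightarrow> q \<le> ennreal (l / 2) * A + ennreal (c / l)"
  shows "q ^ 2 \<le> ennreal (2 * c) * A"
proof (cases A)
  case top
  then show ?thesis using c by (simp add: ennreal_mult_top)
next
  case (real \<alpha>)
  note A = real
  show ?thesis
  proof (cases "\<alpha> = 0")
    case True
    obtain x where x: "q = ennreal x" "0 \<le> x"
    proof (cases q)
      case (real r) then show ?thesis using that by simp
    next
      case top then have "top \<le> ennreal (c / 1)" using H[of 1] A True by simp
      then show ?thesis by (simp add: top_unique)
    qed
    have "x = 0"
    proof (rule ccontr)
      assume "x \<noteq> 0" then have xp: "0 < x" using x by simp
      have "q \<le> ennreal (c / (2 * c / x))" using H[of "2 * c / x"] A True c xp by simp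
      also have "c / (2 * c / x) = x / 2" using c xp by (simp add: field_simps)
      finally have "x \<le> x / 2" using x xp by (simp add: ennreal_le_iff)
      then show False using xp by simp
    qed
    then show ?thesis using x by simp
  next
    case False
    then have ap: "0 < \<alpha>" using A by simp
    define S where "S = sqrt (2 * c * \<alpha>)"
    have Sp: "0 < S" using c ap by (simp add: S_def)
    have S2: "S ^ 2 = 2 * c * \<alpha>" using c ap by (simp add: S_def)
    have e1: "ennreal ((S / \<alpha>) / 2) * A = ennreal ((S / \<alpha>) / 2 * \<alpha>)"
      unfolding A by (rule ennreal_mult[symmetric]) (use ap Sp in auto)
    have "q \<le> ennreal ((S / \<alpha>) / 2) * A + ennreal (c / (S / \<alpha>))" using H[of "S / \<alpha>"] Sp ap by simp
    also have "\<dots> = ennreal ((S / \<alpha>) / 2 * \<alpha>) + ennreal (c / (S / \<alpha>))"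
      by (simp only: e1)
    also have "\<dots> = ennreal ((S / \<alpha>) / 2 * \<alpha> + c / (S / \<alpha>))"
      by (rule ennreal_plus[symmetric]) (use ap Sp c in auto)
    also have "(S / \<alpha>) / 2 * \<alpha> + c / (S / \<alpha>) = S"
    proof -
      have "c / (S / \<alpha>) = c * \<alpha> / S" using ap Sp by (simp add: field_simps)
      also have "\<dots> = S / 2" using S2 Sp by (simp add: field_simps power2_eq_square)
      finally have h2: "c / (S / \<alpha>) = S / 2" .
      have h1: "(S / \<alpha>) / 2 * \<alpha> = S / 2" using ap by (simp add: field_simps)
      show ?thesis by (simp only: h1 h2)
    qed
    finally have "q \<le> ennreal S" .
    then have "q ^ 2 \<le> ennreal S ^ 2" by (rule power_mono) simp
    also have "\<dots> = ennreal (S ^ 2)" using Sp by (simp add: ennreal_power)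
    also have "\<dots> = ennreal (2 * c) * ennreal \<alpha>" unfolding S2 by (rule ennreal_mult) (use c ap in auto)
    also have "\<dots> = ennreal (2 * c) * A" using A by simp
    finally show ?thesis .
  qed
qed

lemma amgm_ennreal:
  fixes k :: ennreal and a l :: real
  assumes a: "0 < a" and l: "0 < l"
  shows "k \<le> ennreal (l / 2) * (ennreal a * k ^ 2) + ennreal (1 / (2 * l * a))"
proof (cases k)
  case top
  then show ?thesis using a l by (simp add: ennreal_mult_top ennreal_top_mult)
next
  case (real x)
  have "x \<le> l / 2 * (a * x ^ 2) + 1 / (2 * l * a)"
  proof -
    have "0 \<le> (l * a * x - 1) ^ 2" by simp
    then have "2 * l * a * x \<le> (l * a * x) ^ 2 + 1" by (simp add: power2_eq_square algebra_simps)
    then have "x \<le> ((l * a * x) ^ 2 + 1) / (2 * l * a)" using a l by (simp add: field_simps)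
    also have "((l * a * x) ^ 2 + 1) / (2 * l * a) = l / 2 * (a * x ^ 2) + 1 / (2 * l * a)"
      using a l by (simp add: field_simps power2_eq_square)
    finally show ?thesis .
  qed
  then have "ennreal x \<le> ennreal (l / 2 * (a * x ^ 2) + 1 / (2 * l * a))" by (rule ennreal_leI)
  also have "\<dots> = ennreal (l / 2 * (a * x ^ 2)) + ennreal (1 / (2 * l * a))"
    by (rule ennreal_plus) (use a l real in auto)
  also have "ennreal (l / 2 * (a * x ^ 2)) = ennreal (l / 2) * ennreal (a * x ^ 2)"
    by (rule ennreal_mult) (use a l in auto)
  also have "ennreal (a * x ^ 2) = ennreal a * ennreal (x ^ 2)"
    by (rule ennreal_mult) (use a in auto)
  also have "ennreal (x ^ 2) = ennreal x ^ 2" using real by (simp add: ennreal_power)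
  finally show ?thesis using real by simp
qed

lemma tonelli_tri:
  fixes f g :: "real \<Rightarrow> ennreal"
  assumes [measurable]: "f \<in> borel_measurable borel" "g \<in> borel_measurable borel"
  shows "(\<integral>\<^sup>+s. f s * (\<integral>\<^sup>+r. g r * indicator {s<..} r \<partial>lborel) \<partial>lborel)
       = (\<integral>\<^sup>+r. g r * (\<integral>\<^sup>+s. f s * indicator {..<r} s \<partial>lborel) \<partial>lborel)"
proof -
  have m: "(\<lambda>(s, r). f s * (g r * indicator {s<..} r)) \<in> borel_measurable (lborel \<Otimes>\<^sub>M lborel)"
  proof -
    have "(\<lambda>(s, r). f s * (g r * indicator {s<..} r)) = (\<lambda>(s::real, r::real). f s * (g r * (if s < r then 1 else 0)))"
      by (auto simp: indicator_def fun_eq_iff)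
    also have "\<dots> \<in> borel_measurable (lborel \<Otimes>\<^sub>M lborel)" by measurable
    finally show ?thesis .
  qed
  have "(\<integral>\<^sup>+s. f s * (\<integral>\<^sup>+r. g r * indicator {s<..} r \<partial>lborel) \<partial>lborel)
      = (\<integral>\<^sup>+s. (\<integral>\<^sup>+r. f s * (g r * indicator {s<..} r) \<partial>lborel) \<partial>lborel)"
  proof (rule nn_integral_cong)
    fix s :: real
    show "f s * (\<integral>\<^sup>+r. g r * indicator {s<..} r \<partial>lborel) = (\<integral>\<^sup>+r. f s * (g r * indicator {s<..} r) \<partial>lborel)"
      by (rule nn_integral_cmult[symmetric]) measurable
  qed
  also have "\<dots> = (\<integral>\<^sup>+r. (\<integral>\<^sup>+s. f s * (g r * indicator {s<..} r) \<partial>lborel) \<partial>lborel)"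
    by (rule lborel_pair.Fubini'[symmetric]) (rule m)
  also have "\<dots> = (\<integral>\<^sup>+r. g r * (\<integral>\<^sup>+s. f s * indicator {..<r} s \<partial>lborel) \<partial>lborel)"
  proof (rule nn_integral_cong)
    fix r :: real
    have "(\<integral>\<^sup>+s. f s * (g r * indicator {s<..} r) \<partial>lborel) = (\<integral>\<^sup>+s. g r * (f s * indicator {..<r} s) \<partial>lborel)"
      by (rule nn_integral_cong) (simp add: indicator_def mult_ac)
    also have "\<dots> = g r * (\<integral>\<^sup>+s. f s * indicator {..<r} s \<partial>lborel)"
      by (rule nn_integral_cmult) measurable
    finally show "(\<integral>\<^sup>+s. f s * (g r * indicator {s<..} r) \<partial>lborel) = g r * (\<integral>\<^sup>+s. f s * indicator {..<r} s \<partial>lborel)" .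
  qed
  finally show ?thesis .
qed


lemma nn_tail_le:
  fixes f :: "real \<Rightarrow> ennreal"
  assumes [measurable]: "f \<in> borel_measurable borel"
    and H: "\<And>c. a < c \<Longrightarrow> (\<integral>\<^sup>+x. f x * indicator {a<..<c} x \<partial>lborel) \<le> C"
  shows "(\<integral>\<^sup>+x. f x * indicator {a<..} x \<partial>lborel) \<le> C"
proof -
  have "(\<integral>\<^sup>+x. f x * indicator {a<..} x \<partial>lborel) = (\<integral>\<^sup>+x. (SUP n. f x * indicator {a<..<a + real n} x) \<partial>lborel)"
  proof (rule nn_integral_cong)
    fix x :: real
    show "f x * indicator {a<..} x = (SUP n. f x * indicator {a<..<a + real n} x)"
    proof (cases "a < x")
      case True
      obtain n :: nat where n: "x - a < real n" using reals_Archimedean2 by blast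
      show ?thesis
      proof (rule antisym)
        show "f x * indicator {a<..} x \<le> (SUP n. f x * indicator {a<..<a + real n} x)"
          using True n by (intro SUP_upper2[of n]) (auto simp: indicator_def)
        show "(SUP n. f x * indicator {a<..<a + real n} x) \<le> f x * indicator {a<..} x"
          by (intro SUP_least) (auto simp: indicator_def)
      qed
    qed (simp add: indicator_def)
  qed
  also have "\<dots> = (SUP n. (\<integral>\<^sup>+x. f x * indicator {a<..<a + real n} x \<partial>lborel))"
  proof (rule nn_integral_monotone_convergence_SUP)
    show "incseq (\<lambda>n x. f x * indicator {a<..<a + real n} x)"
      by (intro incseq_SucI le_funI) (auto simp: indicator_def)
  qed auto
  also have "\<dots> \<le> C"
  proof (rule SUP_least)
    fix n :: nat
    show "(\<integral>\<^sup>+x. f x * indicator {a<..<a + real n} x \<partial>lborel) \<le> C"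
    proof (cases "n = 0")
      case True then show ?thesis by simp
    next
      case False then show ?thesis by (intro H) simp
    qed
  qed
  finally show ?thesis .
qed

lemma ennreal_le_div_real:
  fixes X :: ennreal
  assumes "X * ennreal v \<le> ennreal m" "0 < v"
  shows "X \<le> ennreal (m / v)"
proof (cases X)
  case top
  then show ?thesis using assms by (simp add: ennreal_top_mult top_unique)
next
  case (real x)
  then have "ennreal (x * v) \<le> ennreal m" using assms by (simp add: ennreal_mult)
  show ?thesis
  proof (cases "x = 0")
    case True then show ?thesis using real by simp
  next
    case False
    then have "0 < x * v" using real assms by simp
    then have "x * v \<le> m" using \<open>ennreal (x * v) \<le> ennreal m\<close> by (auto simp: ennreal_le_iff2)
    then have "x \<le> m / v" using assms by (simp add: field_simps)
    then show ?thesis using real by (simp add: ennreal_leI)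
  qed
qed

context rtree
begin

lemma V_fin_all: "(\<integral>\<^sup>+x\<in>{s<..}. ennreal (1 / g0 T b x) \<partial>lborel) < \<infinity>"
proof (cases "0 \<le> s")
  case True then show ?thesis by (rule V_fin)
next
  case False
  have "(\<integral>\<^sup>+x\<in>{s<..}. ennreal (1 / g0 T b x) \<partial>lborel) \<le>
    (\<integral>\<^sup>+x. ennreal 1 * indicator {s<..0} x + ennreal (1 / g0 T b x) * indicator {0<..} x \<partial>lborel)"
  proof (intro nn_integral_mono)
    fix x :: real assume "x \<in> space lborel"
    have "1 / g0 T b x \<le> 1" using g0_ge1[of x] by simp
    then show "ennreal (1 / g0 T b x) * indicator {s<..} x \<le> ennreal 1 * indicator {s<..0} x + ennreal (1 / g0 T b x) * indicator {0<..} x"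
      by (auto simp: indicator_def)
  qed
  also have "\<dots> = (\<integral>\<^sup>+x. ennreal 1 * indicator {s<..0} x \<partial>lborel) + (\<integral>\<^sup>+x\<in>{0<..}. ennreal (1 / g0 T b x) \<partial>lborel)"
    by (rule nn_integral_add) auto
  also have "\<dots> < \<infinity>" using fin False by (simp add: less_top)
  finally show ?thesis .
qed

lemma V_antimono: "x \<le> y \<Longrightarrow> Vf y \<le> Vf x"
proof -
  assume xy: "x \<le> y"
  have "(\<integral>\<^sup>+z\<in>{y<..}. ennreal (1 / g0 T b z) \<partial>lborel) \<le> (\<integral>\<^sup>+z\<in>{x<..}. ennreal (1 / g0 T b z) \<partial>lborel)"
    using xy by (intro nn_integral_mono) (auto simp: indicator_def)
  then show ?thesis unfolding Vf_def using V_fin_all[of x] by (intro enn2real_mono) (auto simp: less_top)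
qed

lemma Vf_meas[measurable]: "Vf \<in> borel_measurable borel"
proof -
  have "mono (\<lambda>x. - Vf x)" by (intro monoI) (simp add: V_antimono)
  then have m: "(\<lambda>x. - Vf x) \<in> borel_measurable borel" by (rule borel_measurable_mono)
  have "(\<lambda>x. - (- Vf x)) \<in> borel_measurable borel" using m by measurable
  then show ?thesis by simp
qed

lemma vertices_finite: "\<exists>S. finite S \<and> (\<forall>x. 0 < x \<longrightarrow> x < c \<longrightarrow> x \<notin> S \<longrightarrow> (\<exists>k. t k < x \<and> x < t (Suc k)))"
proof -
  obtain N where N: "c < t N" using t_unbounded by blast
  show ?thesis
  proof (intro exI[of _ "t ` {..N}"] conjI allI impI)
    fix x assume x: "0 < x" "x < c" "x \<notin> t ` {..N}"
    obtain k where k: "t k < x" "x \<le> t (Suc k)" using edge_ex x by blast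
    have "x \<noteq> t (Suc k)"
    proof
      assume eq: "x = t (Suc k)"
      then have "t (Suc k) < t N" using x N by simp
      then have "Suc k \<le> N" by (simp add: t_less_iff)
      then show False using x eq by auto
    qed
    then show "\<exists>k. t k < x \<and> x < t (Suc k)" using k by (intro exI[of _ k]) auto
  qed simp
qed

lemma ftc_V:
  fixes \<phi> \<phi>' :: "real \<Rightarrow> real"
  assumes ac: "0 \<le> a" "a \<le> c"
    and phi: "\<And>y. 0 < y \<Longrightarrow> (\<phi> has_real_derivative \<phi>' y) (at y)"
    and nn: "\<And>y. 0 < y \<Longrightarrow> 0 \<le> \<phi>' y"
  shows "(\<integral>\<^sup>+x. ennreal (\<phi>' (Vf x) / g0 T b x) * indicator {a<..<c} x \<partial>lborel) = ennreal (\<phi> (Vf a) - \<phi> (Vf c))"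
proof -
  obtain S where S: "finite S" "\<And>x. 0 < x \<Longrightarrow> x < c \<Longrightarrow> x \<notin> S \<Longrightarrow> \<exists>k. t k < x \<and> x < t (Suc k)"
    using vertices_finite[of c] by blast
  have "(\<integral>\<^sup>+x. ennreal (\<phi>' (Vf x) / g0 T b x) * indicator {a<..<c} x \<partial>lborel) = ennreal ((- \<phi> (Vf c)) - (- \<phi> (Vf a)))"
  proof (rule ftc_nn[OF ac(2) S(1)])
    have cV: "continuous_on {a..c} Vf" using V_cont by (rule continuous_on_subset) (use ac in auto)
    have cphi: "continuous_on (Vf ` {a..c}) \<phi>"
    proof (rule continuous_at_imp_continuous_on, rule ballI)
      fix y assume "y \<in> Vf ` {a..c}"
      then have "0 < y" using V_pos ac by auto
      then show "isCont \<phi> y" using phi[of y] by (intro DERIV_isCont) auto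
    qed
    have "continuous_on {a..c} (\<lambda>x. \<phi> (Vf x))" using continuous_on_compose2[OF cphi cV] by auto
    then show "continuous_on {a..c} (\<lambda>x. - \<phi> (Vf x))" by (intro continuous_on_minus)
  next
    fix x assume x: "x \<in> {a<..<c} - S"
    then obtain k where k: "t k < x" "x < t (Suc k)" using S(2)[of x] ac by auto
    have Vx: "0 < Vf x" using V_pos x ac by auto
    have g: "g0 T b x = gk k" using k by (intro g0_edge) auto
    have "((\<lambda>x. \<phi> (Vf x)) has_real_derivative \<phi>' (Vf x) * (- 1 / gk k)) (at x)"
      using DERIV_chain2[OF phi[OF Vx] V_deriv[OF k]] .
    then have "((\<lambda>x. - \<phi> (Vf x)) has_real_derivative - (\<phi>' (Vf x) * (- 1 / gk k))) (at x)"
      by (rule DERIV_minus)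
    then show "((\<lambda>x. - \<phi> (Vf x)) has_real_derivative \<phi>' (Vf x) / g0 T b x) (at x)"
      using g by simp
  next
    fix x assume x: "x \<in> {a<..<c}"
    then have "0 < Vf x" using V_pos ac by auto
    then show "0 \<le> \<phi>' (Vf x) / g0 T b x" using nn g0_pos[of x] by simp
  qed
  then show ?thesis by simp
qed

end

context rtree
begin

declare Vf_nonneg[simp]

lemma B_tail:
  assumes s: "0 \<le> s"
  shows "(\<integral>\<^sup>+x. ennreal (inverse (sqrt (Vf x)) / g0 T b x) * indicator {s<..} x \<partial>lborel) \<le> ennreal (2 * sqrt (Vf s))"
proof (rule nn_tail_le)
  show "(\<lambda>x. ennreal (inverse (sqrt (Vf x)) / g0 T b x)) \<in> borel_measurable borel" by measurable
  fix c assume c: "s < c"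
  have "(\<integral>\<^sup>+x. ennreal (inverse (sqrt (Vf x)) / g0 T b x) * indicator {s<..<c} x \<partial>lborel)
      = ennreal (2 * sqrt (Vf s) - 2 * sqrt (Vf c))"
  proof (rule ftc_V[where \<phi> = "\<lambda>y. 2 * sqrt y" and \<phi>' = "\<lambda>y. inverse (sqrt y)"])
    fix y :: real assume y: "0 < y"
    have "((\<lambda>y. 2 * sqrt y) has_real_derivative 2 * (inverse (sqrt y) / 2)) (at y)"
      by (rule DERIV_cmult) (rule DERIV_real_sqrt[OF y])
    then show "((\<lambda>y. 2 * sqrt y) has_real_derivative inverse (sqrt y)) (at y)" by simp
  qed (use s c in auto)
  also have "\<dots> \<le> ennreal (2 * sqrt (Vf s))" by (rule ennreal_leI) (simp add: Vf_nonneg)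
  finally show "(\<integral>\<^sup>+x. ennreal (inverse (sqrt (Vf x)) / g0 T b x) * indicator {s<..<c} x \<partial>lborel) \<le> ennreal (2 * sqrt (Vf s))" .
qed

lemma B_cs:
  fixes K :: "real \<Rightarrow> ennreal"
  assumes [measurable]: "K \<in> borel_measurable borel" and s: "0 \<le> s"
  shows "(\<integral>\<^sup>+r. K r * indicator {s<..} r \<partial>lborel) ^ 2
    \<le> ennreal (2 * sqrt (Vf s)) * (\<integral>\<^sup>+r. ennreal (g0 T b r * sqrt (Vf r)) * K r ^ 2 * indicator {s<..} r \<partial>lborel)"
proof (rule opt_lemma)
  show "0 < sqrt (Vf s)" using V_pos[OF s] by simp
  fix l :: real assume l: "0 < l"
  define A where "A = (\<integral>\<^sup>+r. ennreal (g0 T b r * sqrt (Vf r)) * K r ^ 2 * indicator {s<..} r \<partial>lborel)"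
  define B where "B = (\<integral>\<^sup>+x. ennreal (inverse (sqrt (Vf x)) / g0 T b x) * indicator {s<..} x \<partial>lborel)"
  have "(\<integral>\<^sup>+r. K r * indicator {s<..} r \<partial>lborel) \<le>
      (\<integral>\<^sup>+r. ennreal (l / 2) * (ennreal (g0 T b r * sqrt (Vf r)) * K r ^ 2 * indicator {s<..} r)
        + ennreal (1 / (2 * l)) * (ennreal (inverse (sqrt (Vf r)) / g0 T b r) * indicator {s<..} r) \<partial>lborel)"
  proof (intro nn_integral_mono)
    fix r :: real assume "r \<in> space lborel"
    show "K r * indicator {s<..} r \<le> ennreal (l / 2) * (ennreal (g0 T b r * sqrt (Vf r)) * K r ^ 2 * indicator {s<..} r)
        + ennreal (1 / (2 * l)) * (ennreal (inverse (sqrt (Vf r)) / g0 T b r) * indicator {s<..} r)"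
    proof (cases "s < r")
      case True
      have ap: "0 < g0 T b r * sqrt (Vf r)" using V_pos[of r] True s g0_pos[of r] by simp
      have "K r \<le> ennreal (l / 2) * (ennreal (g0 T b r * sqrt (Vf r)) * K r ^ 2) + ennreal (1 / (2 * l * (g0 T b r * sqrt (Vf r))))"
        by (rule amgm_ennreal[OF ap l])
      also have "ennreal (1 / (2 * l * (g0 T b r * sqrt (Vf r)))) = ennreal (1 / (2 * l)) * ennreal (inverse (sqrt (Vf r)) / g0 T b r)"
      proof -
        have eq: "1 / (2 * l * (g0 T b r * sqrt (Vf r))) = (1 / (2 * l)) * (inverse (sqrt (Vf r)) / g0 T b r)"
          by (simp add: field_simps)
        show ?thesis unfolding eq by (rule ennreal_mult) (use l g0_pos[of r] Vf_nonneg[of r] in auto)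
      qed
      finally show ?thesis using True by simp
    qed simp
  qed
  also have "\<dots> = ennreal (l / 2) * A + ennreal (1 / (2 * l)) * B"
    unfolding A_def B_def
    by (subst nn_integral_add) (auto simp: nn_integral_cmult)
  also have "ennreal (1 / (2 * l)) * B \<le> ennreal (1 / (2 * l)) * ennreal (2 * sqrt (Vf s))"
    unfolding B_def by (intro mult_left_mono B_tail s) simp
  also have "ennreal (1 / (2 * l)) * ennreal (2 * sqrt (Vf s)) = ennreal (sqrt (Vf s) / l)"
  proof -
    have "ennreal (1 / (2 * l)) * ennreal (2 * sqrt (Vf s)) = ennreal (1 / (2 * l) * (2 * sqrt (Vf s)))"
      by (rule ennreal_mult[symmetric]) (use l Vf_nonneg[of s] in auto)
    also have "1 / (2 * l) * (2 * sqrt (Vf s)) = sqrt (Vf s) / l" using l by simp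
    finally show ?thesis .
  qed
  finally show "(\<integral>\<^sup>+r. K r * indicator {s<..} r \<partial>lborel) \<le> ennreal (l / 2) * A + ennreal (sqrt (Vf s) / l)"
    by (simp add: add_left_mono)
qed

lemma sqrtV_ftc:
  assumes rs: "0 \<le> s" "s \<le> r"
  shows "ennreal (sqrt (Vf s)) = ennreal (sqrt (Vf r)) +
    (\<integral>\<^sup>+x. ennreal (inverse (sqrt (Vf x)) / 2 / g0 T b x) * indicator {s<..<r} x \<partial>lborel)"
proof -
  have "(\<integral>\<^sup>+x. ennreal (inverse (sqrt (Vf x)) / 2 / g0 T b x) * indicator {s<..<r} x \<partial>lborel)
      = ennreal (sqrt (Vf s) - sqrt (Vf r))"
  proof (rule ftc_V[where \<phi> = "sqrt" and \<phi>' = "\<lambda>y. inverse (sqrt y) / 2"])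
    fix y :: real assume y: "0 < y"
    show "(sqrt has_real_derivative inverse (sqrt y) / 2) (at y)" by (rule DERIV_real_sqrt[OF y])
  qed (use rs in auto)
  moreover have "sqrt (Vf r) \<le> sqrt (Vf s)" using V_mono[OF rs] by simp
  moreover have "ennreal (sqrt (Vf r)) + ennreal (sqrt (Vf s) - sqrt (Vf r)) = ennreal (sqrt (Vf r) + (sqrt (Vf s) - sqrt (Vf r)))"
    by (rule ennreal_plus[symmetric]) (use calculation Vf_nonneg[of r] in auto)
  ultimately show ?thesis by simp
qed

lemma B_inner:
  fixes \<psi>0 :: "real \<Rightarrow> real" and m :: real
  assumes [measurable]: "\<psi>0 \<in> borel_measurable borel" and m0: "0 \<le> m"
    and PM: "\<And>\<tau>. 0 < \<tau> \<Longrightarrow> (\<integral>\<^sup>+s. ennreal (\<psi>0 s * g0 T b s) * indicator {0<..\<tau>} s \<partial>lborel) * ennreal (Vf \<tau>) \<le> ennreal m"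
    and r: "0 < r"
  shows "(\<integral>\<^sup>+s. ennreal (\<psi>0 s * g0 T b s) * ennreal (sqrt (Vf s)) * indicator {0<..<r} s \<partial>lborel) \<le> ennreal (2 * m / sqrt (Vf r))"
proof -
  define a where "a s = ennreal (\<psi>0 s * g0 T b s)" for s
  define \<kappa> where "\<kappa> x = ennreal (inverse (sqrt (Vf x)) / 2 / g0 T b x)" for x
  have [measurable]: "a \<in> borel_measurable borel" unfolding a_def by measurable
  have [measurable]: "\<kappa> \<in> borel_measurable borel" unfolding \<kappa>_def by measurable
  have Vr: "0 < Vf r" using V_pos r by simp
  have Pb: "(\<integral>\<^sup>+s. a s * indicator {0<..<\<tau>} s \<partial>lborel) \<le> ennreal (m / Vf \<tau>)" if \<tau>: "0 < \<tau>" for \<tau>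
  proof -
    have "(\<integral>\<^sup>+s. a s * indicator {0<..<\<tau>} s \<partial>lborel) \<le> (\<integral>\<^sup>+s. ennreal (\<psi>0 s * g0 T b s) * indicator {0<..\<tau>} s \<partial>lborel)"
      unfolding a_def by (intro nn_integral_mono) (auto simp: indicator_def)
    also have "\<dots> \<le> ennreal (m / Vf \<tau>)"
      by (rule ennreal_le_div_real[OF PM[OF \<tau>]]) (use V_pos \<tau> in auto)
    finally show ?thesis .
  qed
  define J where "J s = (\<integral>\<^sup>+x. (\<kappa> x * indicator {..<r} x) * indicator {s<..} x \<partial>lborel)" for s
  have Jm[measurable]: "J \<in> borel_measurable borel"
  proof -
    have "(\<lambda>(s, x). (\<kappa> x * indicator {..<r} x) * indicator {s<..} x) = (\<lambda>(s::real, x::real). (\<kappa> x * indicator {..<r} x) * (if s < x then 1 else 0))"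
      by (auto simp: indicator_def fun_eq_iff)
    also have "\<dots> \<in> borel_measurable (lborel \<Otimes>\<^sub>M lborel)" by measurable
    finally have "(\<lambda>(s, x). (\<kappa> x * indicator {..<r} x) * indicator {s<..} x) \<in> borel_measurable (lborel \<Otimes>\<^sub>M lborel)" .
    then show ?thesis unfolding J_def using lborel.borel_measurable_nn_integral[of "\<lambda>s x. (\<kappa> x * indicator {..<r} x) * indicator {s<..} x" lborel]
      by simp
  qed
  have T2: "(\<integral>\<^sup>+s. (a s * indicator {0<..<r} s) * J s \<partial>lborel) \<le> ennreal (m / sqrt (Vf r))"
  proof -
    have "(\<integral>\<^sup>+s. (a s * indicator {0<..<r} s) * J s \<partial>lborel)
       = (\<integral>\<^sup>+x. (\<kappa> x * indicator {..<r} x) * (\<integral>\<^sup>+s. (a s * indicator {0<..<r} s) * indicator {..<x} s \<partial>lborel) \<partial>lborel)"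
      unfolding J_def by (rule tonelli_tri) measurable
    also have "\<dots> \<le> (\<integral>\<^sup>+x. ennreal m * (ennreal (inverse (Vf x * sqrt (Vf x)) / 2 / g0 T b x) * indicator {0<..<r} x) \<partial>lborel)"
    proof (intro nn_integral_mono)
      fix x :: real assume "x \<in> space lborel"
      show "(\<kappa> x * indicator {..<r} x) * (\<integral>\<^sup>+s. (a s * indicator {0<..<r} s) * indicator {..<x} s \<partial>lborel)
        \<le> ennreal m * (ennreal (inverse (Vf x * sqrt (Vf x)) / 2 / g0 T b x) * indicator {0<..<r} x)"
      proof (cases "x \<in> {0<..<r}")
        case True
        have "(\<integral>\<^sup>+s. (a s * indicator {0<..<r} s) * indicator {..<x} s \<partial>lborel) = (\<integral>\<^sup>+s. a s * indicator {0<..<x} s \<partial>lborel)"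
          using True by (intro nn_integral_cong) (auto simp: indicator_def)
        also have "\<dots> \<le> ennreal (m / Vf x)" using True by (intro Pb) auto
        finally have I: "(\<integral>\<^sup>+s. (a s * indicator {0<..<r} s) * indicator {..<x} s \<partial>lborel) \<le> ennreal (m / Vf x)" .
        have Vx: "0 < Vf x" using V_pos True by auto
        have "(\<kappa> x * indicator {..<r} x) * (\<integral>\<^sup>+s. (a s * indicator {0<..<r} s) * indicator {..<x} s \<partial>lborel)
            \<le> \<kappa> x * ennreal (m / Vf x)" using True I by (simp add: mult_left_mono)
        also have "\<kappa> x * ennreal (m / Vf x) = ennreal (inverse (sqrt (Vf x)) / 2 / g0 T b x * (m / Vf x))"
          unfolding \<kappa>_def by (rule ennreal_mult[symmetric]) (use Vx g0_pos[of x] m0 in auto)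
        also have "inverse (sqrt (Vf x)) / 2 / g0 T b x * (m / Vf x) = m * (inverse (Vf x * sqrt (Vf x)) / 2 / g0 T b x)"
          by (simp add: field_simps)
        also have "ennreal \<dots> = ennreal m * ennreal (inverse (Vf x * sqrt (Vf x)) / 2 / g0 T b x)"
          by (rule ennreal_mult) (use Vx g0_pos[of x] m0 in auto)
        finally show ?thesis using True by simp
      next
        case False
        show ?thesis
        proof (cases "x < r")
          case True
          with False have "x \<le> 0" by auto
          then have "(\<integral>\<^sup>+s. (a s * indicator {0<..<r} s) * indicator {..<x} s \<partial>lborel) = (\<integral>\<^sup>+s. 0 \<partial>(lborel::real measure))"
            by (intro nn_integral_cong) (auto simp: indicator_def)
          then show ?thesis by simp
        qed simp
      qed
    qed
    also have "\<dots> = ennreal m * ennreal ((- inverse (sqrt (Vf 0))) - (- inverse (sqrt (Vf r))))"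
    proof -
      have "(\<integral>\<^sup>+x. ennreal (inverse (Vf x * sqrt (Vf x)) / 2 / g0 T b x) * indicator {0<..<r} x \<partial>lborel)
          = ennreal ((- inverse (sqrt (Vf 0))) - (- inverse (sqrt (Vf r))))"
      proof (rule ftc_V[where \<phi> = "\<lambda>y. - inverse (sqrt y)" and \<phi>' = "\<lambda>y. inverse (y * sqrt y) / 2"])
        fix y :: real assume y: "0 < y"
        have "((\<lambda>y. inverse (sqrt y)) has_real_derivative - (inverse (sqrt y) * inverse y / 2)) (at y)"
          using DERIV_inverse_fun[OF DERIV_real_sqrt[OF y]] y by simp
        then have "((\<lambda>y. - inverse (sqrt y)) has_real_derivative (inverse (sqrt y) * inverse y / 2)) (at y)"
          using DERIV_minus by fastforce
        moreover have "inverse (sqrt y) * inverse y / 2 = inverse (y * sqrt y) / 2"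
          by (simp add: inverse_mult_distrib mult.commute)
        ultimately show "((\<lambda>y. - inverse (sqrt y)) has_real_derivative inverse (y * sqrt y) / 2) (at y)" by simp
      qed (use r in auto)
      then show ?thesis by (subst nn_integral_cmult) auto
    qed
    also have "\<dots> \<le> ennreal m * ennreal (inverse (sqrt (Vf r)))"
      by (intro mult_left_mono ennreal_leI) (auto simp: Vf_nonneg)
    also have "\<dots> = ennreal (m / sqrt (Vf r))"
      unfolding divide_inverse by (rule ennreal_mult[symmetric]) (use m0 in auto)
    finally show ?thesis .
  qed
  have "(\<integral>\<^sup>+s. a s * ennreal (sqrt (Vf s)) * indicator {0<..<r} s \<partial>lborel)
      = (\<integral>\<^sup>+s. ennreal (sqrt (Vf r)) * (a s * indicator {0<..<r} s) + (a s * indicator {0<..<r} s) * J s \<partial>lborel)"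
  proof (rule nn_integral_cong)
    fix s :: real
    show "a s * ennreal (sqrt (Vf s)) * indicator {0<..<r} s = ennreal (sqrt (Vf r)) * (a s * indicator {0<..<r} s) + (a s * indicator {0<..<r} s) * J s"
    proof (cases "s \<in> {0<..<r}")
      case True
      then have "ennreal (sqrt (Vf s)) = ennreal (sqrt (Vf r)) + (\<integral>\<^sup>+x. \<kappa> x * indicator {s<..<r} x \<partial>lborel)"
        unfolding \<kappa>_def by (intro sqrtV_ftc) auto
      also have "(\<integral>\<^sup>+x. \<kappa> x * indicator {s<..<r} x \<partial>lborel) = J s"
        unfolding J_def by (intro nn_integral_cong) (auto simp: indicator_def)
      finally show ?thesis using True by (simp add: distrib_left mult_ac)
    qed simp
  qed
  also have "\<dots> = ennreal (sqrt (Vf r)) * (\<integral>\<^sup>+s. a s * indicator {0<..<r} s \<partial>lborel)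
      + (\<integral>\<^sup>+s. (a s * indicator {0<..<r} s) * J s \<partial>lborel)"
    by (subst nn_integral_add) (auto simp: nn_integral_cmult)
  also have "\<dots> \<le> ennreal (sqrt (Vf r)) * ennreal (m / Vf r) + ennreal (m / sqrt (Vf r))"
    by (intro add_mono mult_left_mono Pb T2 r) simp
  also have "ennreal (sqrt (Vf r)) * ennreal (m / Vf r) = ennreal (m / sqrt (Vf r))"
  proof -
    have "ennreal (sqrt (Vf r)) * ennreal (m / Vf r) = ennreal (sqrt (Vf r) * (m / Vf r))"
      by (rule ennreal_mult[symmetric]) (use Vr m0 in auto)
    also have "sqrt (Vf r) * (m / Vf r) = m / sqrt (Vf r)"
      using Vr by (simp add: field_simps)
    finally show ?thesis .
  qed
  also have "ennreal (m / sqrt (Vf r)) + ennreal (m / sqrt (Vf r)) = ennreal (2 * m / sqrt (Vf r))"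
    using m0 Vr by (simp add: ennreal_plus[symmetric])
  finally show ?thesis unfolding a_def .
qed

lemma B_final:
  fixes \<psi>0 :: "real \<Rightarrow> real" and m :: real and K :: "real \<Rightarrow> ennreal"
  assumes [measurable]: "\<psi>0 \<in> borel_measurable borel" and m0: "0 \<le> m"
    and PM: "\<And>\<tau>. 0 < \<tau> \<Longrightarrow> (\<integral>\<^sup>+s. ennreal (\<psi>0 s * g0 T b s) * indicator {0<..\<tau>} s \<partial>lborel) * ennreal (Vf \<tau>) \<le> ennreal m"
    and [measurable]: "K \<in> borel_measurable borel"
  shows "(\<integral>\<^sup>+s. ennreal (\<psi>0 s * g0 T b s) * (\<integral>\<^sup>+r. K r * indicator {s<..} r \<partial>lborel) ^ 2 * indicator {0<..} s \<partial>lborel)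
    \<le> ennreal (4 * m) * (\<integral>\<^sup>+r. ennreal (g0 T b r) * K r ^ 2 * indicator {0<..} r \<partial>lborel)"
proof -
  define f where "f s = ennreal (\<psi>0 s * g0 T b s) * ennreal (sqrt (Vf s)) * indicator {0<..} s" for s
  define g where "g r = ennreal (g0 T b r * sqrt (Vf r)) * K r ^ 2" for r
  have [measurable]: "f \<in> borel_measurable borel" unfolding f_def by measurable
  have [measurable]: "g \<in> borel_measurable borel" unfolding g_def by measurable
  have mono2: "\<And>x y. x \<le> y \<Longrightarrow> ennreal 2 * x \<le> ennreal 2 * y" by (rule mult_left_mono) simp_all
  have "(\<integral>\<^sup>+s. ennreal (\<psi>0 s * g0 T b s) * (\<integral>\<^sup>+r. K r * indicator {s<..} r \<partial>lborel) ^ 2 * indicator {0<..} s \<partial>lborel)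
     \<le> (\<integral>\<^sup>+s. ennreal 2 * (f s * (\<integral>\<^sup>+r. g r * indicator {s<..} r \<partial>lborel)) \<partial>lborel)"
  proof (intro nn_integral_mono)
    fix s :: real assume "s \<in> space lborel"
    show "ennreal (\<psi>0 s * g0 T b s) * (\<integral>\<^sup>+r. K r * indicator {s<..} r \<partial>lborel) ^ 2 * indicator {0<..} s
      \<le> ennreal 2 * (f s * (\<integral>\<^sup>+r. g r * indicator {s<..} r \<partial>lborel))"
    proof (cases "0 < s")
      case True
      have "(\<integral>\<^sup>+r. K r * indicator {s<..} r \<partial>lborel) ^ 2 \<le> ennreal (2 * sqrt (Vf s)) * (\<integral>\<^sup>+r. g r * indicator {s<..} r \<partial>lborel)"
        unfolding g_def using B_cs[of K s] True by simp
      also have "ennreal (2 * sqrt (Vf s)) = ennreal 2 * ennreal (sqrt (Vf s))" by (rule ennreal_mult) auto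
      finally have "ennreal (\<psi>0 s * g0 T b s) * (\<integral>\<^sup>+r. K r * indicator {s<..} r \<partial>lborel) ^ 2
          \<le> ennreal (\<psi>0 s * g0 T b s) * (ennreal 2 * ennreal (sqrt (Vf s)) * (\<integral>\<^sup>+r. g r * indicator {s<..} r \<partial>lborel))"
        by (rule mult_left_mono) simp
      then show ?thesis using True unfolding f_def by (simp add: mult_ac)
    qed simp
  qed
  also have "\<dots> = ennreal 2 * (\<integral>\<^sup>+s. f s * (\<integral>\<^sup>+r. g r * indicator {s<..} r \<partial>lborel) \<partial>lborel)"
  proof (rule nn_integral_cmult)
    have "(\<lambda>(s, r). g r * indicator {s<..} r) = (\<lambda>(s::real, r::real). g r * (if s < r then 1 else 0))"
      by (auto simp: indicator_def fun_eq_iff)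
    also have "\<dots> \<in> borel_measurable (lborel \<Otimes>\<^sub>M lborel)" by measurable
    finally have "(\<lambda>(s, r). g r * indicator {s<..} r) \<in> borel_measurable (lborel \<Otimes>\<^sub>M lborel)" .
    then have "(\<lambda>s. \<integral>\<^sup>+r. g r * indicator {s<..} r \<partial>lborel) \<in> borel_measurable lborel"
      using lborel.borel_measurable_nn_integral[of "\<lambda>s r. g r * indicator {s<..} r" lborel] by simp
    then show "(\<lambda>s. f s * (\<integral>\<^sup>+r. g r * indicator {s<..} r \<partial>lborel)) \<in> borel_measurable lborel" by measurable
  qed
  also have "(\<integral>\<^sup>+s. f s * (\<integral>\<^sup>+r. g r * indicator {s<..} r \<partial>lborel) \<partial>lborel)
      = (\<integral>\<^sup>+r. g r * (\<integral>\<^sup>+s. f s * indicator {..<r} s \<partial>lborel) \<partial>lborel)"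
    by (rule tonelli_tri) measurable
  also have "\<dots> \<le> (\<integral>\<^sup>+r. ennreal (2 * m) * (ennreal (g0 T b r) * K r ^ 2 * indicator {0<..} r) \<partial>lborel)"
  proof (intro nn_integral_mono)
    fix r :: real assume "r \<in> space lborel"
    show "g r * (\<integral>\<^sup>+s. f s * indicator {..<r} s \<partial>lborel) \<le> ennreal (2 * m) * (ennreal (g0 T b r) * K r ^ 2 * indicator {0<..} r)"
    proof (cases "0 < r")
      case True
      have Vr: "0 < Vf r" using V_pos True by simp
      have "(\<integral>\<^sup>+s. f s * indicator {..<r} s \<partial>lborel) = (\<integral>\<^sup>+s. ennreal (\<psi>0 s * g0 T b s) * ennreal (sqrt (Vf s)) * indicator {0<..<r} s \<partial>lborel)"
        unfolding f_def by (intro nn_integral_cong) (auto simp: indicator_def)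
      also have "\<dots> \<le> ennreal (2 * m / sqrt (Vf r))" by (rule B_inner[OF _ m0 PM True]) measurable
      finally have "g r * (\<integral>\<^sup>+s. f s * indicator {..<r} s \<partial>lborel) \<le> g r * ennreal (2 * m / sqrt (Vf r))"
        by (rule mult_left_mono) simp
      also have "g r * ennreal (2 * m / sqrt (Vf r)) = ennreal (2 * m) * (ennreal (g0 T b r) * K r ^ 2)"
      proof -
        have "ennreal (g0 T b r * sqrt (Vf r)) * ennreal (2 * m / sqrt (Vf r)) = ennreal (g0 T b r * sqrt (Vf r) * (2 * m / sqrt (Vf r)))"
          by (rule ennreal_mult[symmetric]) (use Vr g0_pos[of r] m0 in auto)
        also have "g0 T b r * sqrt (Vf r) * (2 * m / sqrt (Vf r)) = (2 * m) * g0 T b r" using Vr by simp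
        also have "ennreal \<dots> = ennreal (2 * m) * ennreal (g0 T b r)"
          by (rule ennreal_mult) (use g0_pos[of r] m0 in auto)
        finally show ?thesis unfolding g_def by (simp add: mult_ac)
      qed
      finally show ?thesis using True by simp
    next
      case False
      have "(\<integral>\<^sup>+s. f s * indicator {..<r} s \<partial>lborel) = (\<integral>\<^sup>+s. 0 \<partial>(lborel::real measure))"
        unfolding f_def using False by (intro nn_integral_cong) (auto simp: indicator_def)
      then show ?thesis using False by simp
    qed
  qed
  also have "\<dots> = ennreal (2 * m) * (\<integral>\<^sup>+r. ennreal (g0 T b r) * K r ^ 2 * indicator {0<..} r \<partial>lborel)"
    by (rule nn_integral_cmult) measurable
  finally have fin: "(\<integral>\<^sup>+s. ennreal (\<psi>0 s * g0 T b s) * (\<integral>\<^sup>+r. K r * indicator {s<..} r \<partial>lborel) ^ 2 * indicator {0<..} s \<partial>lborel)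
    \<le> ennreal 2 * (ennreal (2 * m) * (\<integral>\<^sup>+r. ennreal (g0 T b r) * K r ^ 2 * indicator {0<..} r \<partial>lborel))"
    using mono2 by blast
  have "ennreal 2 * ennreal (2 * m) = ennreal (2 * (2 * m))"
    by (rule ennreal_mult[symmetric]) (use m0 in auto)
  then have "ennreal 2 * ennreal (2 * m) = ennreal (4 * m)" by simp
  then show ?thesis using fin by (simp add: mult.assoc[symmetric])
qed

end

lemma smooth_DERIV: "smooth_fun f \<Longrightarrow> (f has_real_derivative deriv f x) (at x)"
proof -
  assume "smooth_fun f"
  then have "((deriv ^^ 0) f) differentiable (at x)" unfolding smooth_fun_def by blast
  then show ?thesis by (simp add: DERIV_deriv_iff_real_differentiable)
qed

lemma smooth_deriv_cont: "smooth_fun f \<Longrightarrow> continuous_on A (deriv f)"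
proof -
  assume "smooth_fun f"
  then have "\<forall>x. ((deriv ^^ 1) f) differentiable (at x)" unfolding smooth_fun_def by blast
  then have "\<forall>x. isCont (deriv f) x" by (simp add: differentiable_imp_continuous_within)
  then show ?thesis by (simp add: continuous_at_imp_continuous_on)
qed

lemma sum_cs_abs: "\<bar>\<Sum>i\<in>A. f i * g i\<bar> \<le> sqrt (\<Sum>i\<in>A. (f i)^2) * sqrt (\<Sum>i\<in>A. (g i)^2)"
proof -
  have "\<bar>\<Sum>i\<in>A. f i * g i\<bar> \<le> (\<Sum>i\<in>A. \<bar>f i\<bar> * \<bar>g i\<bar>)"
    by (rule order_trans[OF sum_abs]) (simp add: abs_mult)
  also have "\<dots> \<le> L2_set f A * L2_set g A" by (rule L2_set_mult_ineq)
  finally show ?thesis by (simp add: L2_set_def)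
qed

lemma aux_cancel: "0 < (A::real) \<Longrightarrow> 0 < B \<Longrightarrow> A * B * C / (A * A * B) = C / A"
  by (simp add: field_simps)

locale rtree_u = rtree +
  fixes u :: "real \<Rightarrow> nat list \<Rightarrow> real"
  assumes C0: "C0inf T b u"
begin

definition fs :: "nat \<Rightarrow> nat list \<Rightarrow> real \<Rightarrow> real" where
  "fs k w = (SOME f. smooth_fun f \<and> (\<forall>s. T k \<le> ereal s \<and> ereal s \<le> T (Suc k) \<longrightarrow>
                 f s = (if ereal s = T k then u s (butlast w) else u s w)))"

lemma fs_prop:
  assumes w: "w \<in> words b (Suc k)"
  shows "smooth_fun (fs k w) \<and> (\<forall>s. t k \<le> s \<and> s \<le> t (Suc k) \<longrightarrow> fs k w s = (if s = t k then u s (butlast w) else u s w))"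
proof -
  have "length w = Suc k" "\<forall>i<length w. w ! i < b i" using w by (auto simp: words_def)
  then have "\<exists>f. smooth_fun f \<and> (\<forall>s. T k \<le> ereal s \<and> ereal s \<le> T (Suc k) \<longrightarrow>
                 f s = (if ereal s = T k then u s (butlast w) else u s w))"
    using C0 all_fin[of k] unfolding C0inf_def by blast
  then have "smooth_fun (fs k w) \<and> (\<forall>s. T k \<le> ereal s \<and> ereal s \<le> T (Suc k) \<longrightarrow>
                 fs k w s = (if ereal s = T k then u s (butlast w) else u s w))"
    unfolding fs_def by (rule someI_ex)
  then show ?thesis by (simp add: T_t)
qed

lemma fs_smooth: "w \<in> words b (Suc k) \<Longrightarrow> smooth_fun (fs k w)" using fs_prop by blast

lemma fs_eq: "w \<in> words b (Suc k) \<Longrightarrow> t k < s \<Longrightarrow> s \<le> t (Suc k) \<Longrightarrow> fs k w s = u s w"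
  using fs_prop[of w k] by auto

lemma fs_eq0: "w \<in> words b (Suc k) \<Longrightarrow> fs k w (t k) = u (t k) (butlast w)"
  using fs_prop[of w k] t_Suc[of k] by auto

definition Wk :: "nat \<Rightarrow> nat list set" where "Wk k = words b (Suc k)"

definition Phik :: "nat \<Rightarrow> real \<Rightarrow> real" where
  "Phik k x = (\<Sum>w\<in>Wk k. (fs k w x)^2) / gk k"

definition Gk :: "nat \<Rightarrow> real \<Rightarrow> real" where
  "Gk k x = (\<Sum>w\<in>Wk k. (deriv (fs k w) x)^2)"

definition kk :: "nat \<Rightarrow> real \<Rightarrow> real" where
  "kk k x = sqrt (Gk k x / gk k)"

lemma Phik_nonneg: "0 \<le> Phik k x"
  unfolding Phik_def using gk_pos[of k] by (intro divide_nonneg_pos sum_nonneg) auto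

lemma kk_nonneg: "0 \<le> kk k x"
  unfolding kk_def Gk_def using gk_pos[of k] by (intro real_sqrt_ge_zero divide_nonneg_pos sum_nonneg) auto

lemma kk_cont: "continuous_on A (kk k)"
proof -
  have "continuous_on A (\<lambda>x. deriv (fs k w) x)" if "w \<in> Wk k" for w
    using fs_smooth[of w k] that unfolding Wk_def by (intro smooth_deriv_cont)
  then show ?thesis unfolding kk_def Gk_def
    using gk_pos[of k] by (intro continuous_intros) auto
qed

lemma Phik_deriv:
  "(Phik k has_real_derivative (\<Sum>w\<in>Wk k. 2 * fs k w x * deriv (fs k w) x) / gk k) (at x)"
proof -
  have "((\<lambda>x. \<Sum>w\<in>Wk k. (fs k w x)^2) has_real_derivative (\<Sum>w\<in>Wk k. 2 * fs k w x * deriv (fs k w) x)) (at x)"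
  proof (rule DERIV_sum)
    fix w assume "w \<in> Wk k"
    then have d: "(fs k w has_real_derivative deriv (fs k w) x) (at x)"
      using fs_smooth unfolding Wk_def by (intro smooth_DERIV) auto
    show "((\<lambda>x. (fs k w x)^2) has_real_derivative 2 * fs k w x * deriv (fs k w) x) (at x)"
      using DERIV_pow[of 2 "fs k w x"] DERIV_chain2[OF DERIV_pow d, of 2] by simp
  qed
  then show ?thesis unfolding Phik_def by (rule DERIV_cdivide)
qed

lemma edge_ineq:
  assumes ac: "a \<le> c" and e: "0 < e"
  shows "sqrt (Phik k a + e) \<le> sqrt (Phik k c + e) + integral {a..c} (kk k)"
proof -
  define H where "H x = sqrt (Phik k x + e)" for x
  define P' where "P' x = (\<Sum>w\<in>Wk k. 2 * fs k w x * deriv (fs k w) x) / gk k" for x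
  define H' where "H' x = inverse (sqrt (Phik k x + e)) / 2 * P' x" for x
  have pos: "0 < Phik k x + e" for x using Phik_nonneg[of k x] e by simp
  have dH: "(H has_real_derivative H' x) (at x)" for x
    unfolding H_def H'_def using DERIV_chain2[OF DERIV_real_sqrt[OF pos] DERIV_add[OF Phik_deriv DERIV_const]]
    unfolding P'_def[symmetric] by simp
  have "((\<lambda>x. - H' x) has_integral ((- H c) - (- H a))) {a..c}"
  proof (rule fundamental_theorem_of_calculus[OF ac])
    fix x assume "x \<in> {a..c}"
    have "((\<lambda>x. - H x) has_real_derivative - H' x) (at x)" using dH[of x] by (rule DERIV_minus)
    then have "((\<lambda>x. - H x) has_vector_derivative - H' x) (at x)"
      by (simp add: has_real_derivative_iff_has_vector_derivative)
    then show "((\<lambda>x. - H x) has_vector_derivative - H' x) (at x within {a..c})"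
      by (rule has_vector_derivative_at_within)
  qed
  moreover have "(kk k has_integral integral {a..c} (kk k)) {a..c}"
    by (intro integrable_integral integrable_continuous_real kk_cont)
  moreover have "- H' x \<le> kk k x" for x
  proof -
    define S1 where "S1 = (\<Sum>w\<in>Wk k. (fs k w x)^2)"
    define S2 where "S2 = (\<Sum>w\<in>Wk k. (deriv (fs k w) x)^2)"
    have g: "0 < gk k" by (rule gk_pos)
    have S1n: "0 \<le> S1" unfolding S1_def by (intro sum_nonneg) auto
    have S2n: "0 \<le> S2" unfolding S2_def by (intro sum_nonneg) auto
    have cs: "\<bar>\<Sum>w\<in>Wk k. fs k w x * deriv (fs k w) x\<bar> \<le> sqrt S1 * sqrt S2"
      unfolding S1_def S2_def by (rule sum_cs_abs)
    have sum2: "(\<Sum>w\<in>Wk k. 2 * fs k w x * deriv (fs k w) x) = 2 * (\<Sum>w\<in>Wk k. fs k w x * deriv (fs k w) x)"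
      by (simp add: sum_distrib_left mult.assoc)
    have sp: "0 < sqrt (Phik k x + e)" using pos[of x] by simp
    have bS1: "sqrt S1 \<le> sqrt (gk k) * sqrt (Phik k x + e)"
    proof -
      have "S1 = gk k * Phik k x" unfolding Phik_def S1_def using g by simp
      also have "\<dots> \<le> gk k * (Phik k x + e)" using g e by simp
      finally show ?thesis by (simp add: real_sqrt_mult[symmetric])
    qed
    have eqH: "H' x = (\<Sum>w\<in>Wk k. fs k w x * deriv (fs k w) x) / (gk k * sqrt (Phik k x + e))"
      unfolding H'_def P'_def sum2 using g sp by (simp add: field_simps)
    have "- H' x \<le> \<bar>H' x\<bar>" by simp
    also have "\<bar>H' x\<bar> = \<bar>\<Sum>w\<in>Wk k. fs k w x * deriv (fs k w) x\<bar> / (gk k * sqrt (Phik k x + e))"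
      unfolding eqH using g sp by (simp add: abs_divide)
    also have "\<dots> \<le> sqrt S1 * sqrt S2 / (gk k * sqrt (Phik k x + e))"
      using g sp cs by (intro divide_right_mono) auto
    also have "\<dots> \<le> sqrt (gk k) * sqrt (Phik k x + e) * sqrt S2 / (gk k * sqrt (Phik k x + e))"
      using g sp S2n bS1 by (intro divide_right_mono mult_right_mono) auto
    also have "\<dots> = sqrt S2 / sqrt (gk k)"
    proof -
      have gg: "gk k = sqrt (gk k) * sqrt (gk k)" using g by simp
      have "sqrt (gk k) * sqrt (Phik k x + e) * sqrt S2 / (gk k * sqrt (Phik k x + e))
          = sqrt (gk k) * sqrt (Phik k x + e) * sqrt S2 / (sqrt (gk k) * sqrt (gk k) * sqrt (Phik k x + e))"
        by (subst gg) (rule refl)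
      also have "\<dots> = sqrt S2 / sqrt (gk k)" by (rule aux_cancel) (use g sp in auto)
      finally show ?thesis .
    qed
    also have "\<dots> = kk k x" unfolding kk_def Gk_def S2_def[symmetric] by (simp add: real_sqrt_divide)
    finally show ?thesis .
  qed
  ultimately have "(- H c) - (- H a) \<le> integral {a..c} (kk k)" by (rule has_integral_le)
  then show ?thesis unfolding H_def by simp
qed

end

context rtree_u
begin

lemma int_nn: "a \<le> c \<Longrightarrow> (\<integral>\<^sup>+x. ennreal (kk k x) * indicator {a<..<c} x \<partial>lborel) = ennreal (integral {a..c} (kk k))"
proof -
  assume ac: "a \<le> c"
  have I: "(kk k has_integral integral {a..c} (kk k)) {a..c}"
    by (intro integrable_integral integrable_continuous_real kk_cont)
  have "(\<integral>\<^sup>+x. ennreal (kk k x) * indicator {a..c} x \<partial>lborel) = ennreal (integral {a..c} (kk k))"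
    by (rule nn_integral_has_integral_lebesgue'[OF _ I]) (simp add: kk_nonneg)
  moreover have "(\<integral>\<^sup>+x. ennreal (kk k x) * indicator {a<..<c} x \<partial>lborel) = (\<integral>\<^sup>+x. ennreal (kk k x) * indicator {a..c} x \<partial>lborel)"
  proof (rule nn_integral_cong_AE)
    show "AE x in lborel. ennreal (kk k x) * indicator {a<..<c} x = ennreal (kk k x) * indicator {a..c} x"
      using AE_lborel_singleton[of a] AE_lborel_singleton[of c]
      by eventually_elim (auto simp: indicator_def)
  qed
  ultimately show ?thesis by simp
qed

definition Kt :: "real \<Rightarrow> ennreal" where
  "Kt r = (\<Sum>j. ennreal (kk j r) * indicator {t j<..<t (Suc j)} r)"

lemma kk_meas[measurable]: "kk j \<in> borel_measurable borel"
  by (rule borel_measurable_continuous_onI) (rule kk_cont)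

lemma Kt_meas[measurable]: "Kt \<in> borel_measurable borel"
  unfolding Kt_def by measurable

lemma Kt_edge:
  assumes r: "t k < r" "r < t (Suc k)"
  shows "Kt r = ennreal (kk k r)"
proof -
  have "(\<lambda>j. ennreal (kk j r) * indicator {t j<..<t (Suc j)} r) = (\<lambda>j. if j = k then ennreal (kk k r) else 0)"
  proof
    fix j
    show "ennreal (kk j r) * indicator {t j<..<t (Suc j)} r = (if j = k then ennreal (kk k r) else 0)"
    proof (cases "j = k")
      case True then show ?thesis using r by simp
    next
      case False
      have "r \<notin> {t j<..<t (Suc j)}"
      proof
        assume "r \<in> {t j<..<t (Suc j)}"
        then have "j = k" using r by (intro edge_unique[of k r j]) auto
        with False show False by simp
      qed
      then show ?thesis using False by simp
    qed
  qed
  then show ?thesis unfolding Kt_def using sums_unique[OF sums_single[of k "\<lambda>_. ennreal (kk k r)"]] by simp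
qed

lemma Kt_other:
  assumes "\<not> (\<exists>k. t k < r \<and> r < t (Suc k))"
  shows "Kt r = 0"
proof -
  have "(\<lambda>j. ennreal (kk j r) * indicator {t j<..<t (Suc j)} r) = (\<lambda>j. 0)"
    using assms by (auto simp: indicator_def fun_eq_iff)
  then show ?thesis unfolding Kt_def by simp
qed

definition PhiT :: "real \<Rightarrow> real" where
  "PhiT s = (\<Sum>w\<in>level T b s. (u s w)^2) / g0 T b s"

lemma PhiT_edge:
  assumes s: "t k < s" "s \<le> t (Suc k)"
  shows "PhiT s = Phik k s"
  unfolding PhiT_def Phik_def Wk_def using s
  by (simp add: level_edge g0_edge fs_eq)

lemma butlast_words: "w \<in> words b (Suc n) \<Longrightarrow> butlast w \<in> words b n"
  by (auto simp: words_def nth_butlast)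

lemma vertex_match: "Phik k (t (Suc k)) = Phik (Suc k) (t (Suc k))"
proof -
  let ?t = "t (Suc k)"
  have inj: "inj_on (\<lambda>(v,i). v @ [i]) (words b (Suc k) \<times> {..<b (Suc k)})"
    by (auto simp: inj_on_def)
  have "(\<Sum>w\<in>Wk (Suc k). (fs (Suc k) w ?t)^2) = (\<Sum>w\<in>Wk (Suc k). (u ?t (butlast w))^2)"
    unfolding Wk_def by (intro sum.cong refl) (simp add: fs_eq0)
  also have "\<dots> = (\<Sum>p\<in>words b (Suc k) \<times> {..<b (Suc k)}. (u ?t (butlast ((\<lambda>(v,i). v @ [i]) p)))^2)"
    unfolding Wk_def words_Suc[of b "Suc k"] by (rule sum.reindex[OF inj, unfolded comp_def])
  also have "\<dots> = (\<Sum>p\<in>words b (Suc k) \<times> {..<b (Suc k)}. (u ?t (fst p))^2)"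
    by (intro sum.cong refl) auto
  also have "\<dots> = (\<Sum>v\<in>words b (Suc k). \<Sum>i\<in>{..<b (Suc k)}. (u ?t v)^2)"
    by (subst sum.cartesian_product) (simp add: split_def)
  also have "\<dots> = real (b (Suc k)) * (\<Sum>v\<in>words b (Suc k). (u ?t v)^2)"
    by (simp add: sum_distrib_left)
  finally have A: "(\<Sum>w\<in>Wk (Suc k). (fs (Suc k) w ?t)^2) = real (b (Suc k)) * (\<Sum>v\<in>words b (Suc k). (u ?t v)^2)" .
  have B: "(\<Sum>w\<in>Wk k. (fs k w ?t)^2) = (\<Sum>v\<in>words b (Suc k). (u ?t v)^2)"
    unfolding Wk_def using t_Suc[of k] by (intro sum.cong refl) (simp add: fs_eq)
  have G: "gk (Suc k) = gk k * real (b (Suc k))" unfolding gk_def by simp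
  have bp: "0 < real (b (Suc k))" using b_pos[of "Suc k"] by simp
  show ?thesis unfolding Phik_def A B G using bp gk_pos[of k] by simp
qed

lemma support: "\<exists>K. \<forall>m\<ge>K. \<forall>s. t m \<le> s \<longrightarrow> s \<le> t (Suc m) \<longrightarrow> Phik m s = 0"
proof -
  obtain R where R: "\<And>s w. R < s \<Longrightarrow> w \<in> level T b s \<Longrightarrow> u s w = 0"
    using C0 unfolding C0inf_def by blast
  obtain K0 where K0: "R < t K0" using t_unbounded by blast
  show ?thesis
  proof (intro exI[of _ "Suc K0"] allI impI)
    fix m s assume m: "Suc K0 \<le> m" and s: "t m \<le> s" "s \<le> t (Suc m)"
    have Rm: "R < t m" using K0 t_le[of K0 m] m by simp
    have "fs m w s = 0" if w: "w \<in> Wk m" for w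
    proof (cases "s = t m")
      case True
      obtain m' where m': "m = Suc m'" using m by (cases m) auto
      have "butlast w \<in> words b (Suc m')" using w m' butlast_words unfolding Wk_def by simp
      moreover have "level T b (t m) = words b (Suc m')"
        using m' t_Suc[of m'] by (intro level_edge) auto
      ultimately have "u (t m) (butlast w) = 0" using R Rm by simp
      then show ?thesis using True w fs_eq0 unfolding Wk_def by simp
    next
      case False
      then have s': "t m < s" using s by simp
      have "w \<in> level T b s" using w s' s level_edge unfolding Wk_def by simp
      then have "u s w = 0" using R Rm s' by simp
      then show ?thesis using fs_eq w s' s unfolding Wk_def by simp
    qed
    then show "Phik m s = 0" unfolding Phik_def by simp
  qed
qed

lemma Kt_split:
  assumes "a \<le> c"
  shows "(\<integral>\<^sup>+r. Kt r * indicator {a<..<c} r \<partial>lborel) + (\<integral>\<^sup>+r. Kt r * indicator {c<..} r \<partial>lborel)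
    \<le> (\<integral>\<^sup>+r. Kt r * indicator {a<..} r \<partial>lborel)"
proof -
  have "(\<integral>\<^sup>+r. Kt r * indicator {a<..<c} r \<partial>lborel) + (\<integral>\<^sup>+r. Kt r * indicator {c<..} r \<partial>lborel)
      = (\<integral>\<^sup>+r. Kt r * indicator {a<..<c} r + Kt r * indicator {c<..} r \<partial>lborel)"
    by (rule nn_integral_add[symmetric]) auto
  also have "\<dots> \<le> (\<integral>\<^sup>+r. Kt r * indicator {a<..} r \<partial>lborel)"
    using assms by (intro nn_integral_mono) (auto simp: indicator_def)
  finally show ?thesis .
qed

lemma telescope:
  assumes e: "0 < e"
  shows "\<exists>K. \<forall>d m. K - d \<le> m \<longrightarrow> (\<forall>s. t m \<le> s \<longrightarrow> s \<le> t (Suc m) \<longrightarrow>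
      ennreal (sqrt (Phik m s + e)) \<le> ennreal (sqrt e) + (\<integral>\<^sup>+r. Kt r * indicator {s<..} r \<partial>lborel))"
proof -
  obtain K where K: "\<And>m s. K \<le> m \<Longrightarrow> t m \<le> s \<Longrightarrow> s \<le> t (Suc m) \<Longrightarrow> Phik m s = 0"
    using support by blast
  have "\<forall>m. K - d \<le> m \<longrightarrow> (\<forall>s. t m \<le> s \<longrightarrow> s \<le> t (Suc m) \<longrightarrow>
      ennreal (sqrt (Phik m s + e)) \<le> ennreal (sqrt e) + (\<integral>\<^sup>+r. Kt r * indicator {s<..} r \<partial>lborel))" for d
  proof (induction d)
    case 0
    show ?case
    proof (intro allI impI)
      fix m s assume "K - 0 \<le> m" "t m \<le> s" "s \<le> t (Suc m)"
      then have "Phik m s = 0" using K by simp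
      then show "ennreal (sqrt (Phik m s + e)) \<le> ennreal (sqrt e) + (\<integral>\<^sup>+r. Kt r * indicator {s<..} r \<partial>lborel)"
        by (simp add: add_increasing2)
    qed
  next
    case (Suc d)
    show ?case
    proof (intro allI impI)
      fix m s assume m: "K - Suc d \<le> m" and s: "t m \<le> s" "s \<le> t (Suc m)"
      have m1: "K - d \<le> Suc m" using m by simp
      have tt: "t (Suc m) \<le> t (Suc (Suc m))" using t_Suc[of "Suc m"] by simp
      have IH: "ennreal (sqrt (Phik (Suc m) (t (Suc m)) + e)) \<le> ennreal (sqrt e) + (\<integral>\<^sup>+r. Kt r * indicator {t (Suc m)<..} r \<partial>lborel)"
        using Suc.IH m1 tt by blast
      have E: "sqrt (Phik m s + e) \<le> sqrt (Phik m (t (Suc m)) + e) + integral {s..t (Suc m)} (kk m)"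
        using edge_ineq[OF s(2) e] .
      have Ipos: "0 \<le> integral {s..t (Suc m)} (kk m)"
        by (rule integral_nonneg) (auto intro: integrable_continuous_real kk_cont kk_nonneg)
      have "ennreal (sqrt (Phik m s + e)) \<le> ennreal (sqrt (Phik m (t (Suc m)) + e) + integral {s..t (Suc m)} (kk m))"
        using E by (rule ennreal_leI)
      also have "\<dots> = ennreal (sqrt (Phik m (t (Suc m)) + e)) + ennreal (integral {s..t (Suc m)} (kk m))"
        by (rule ennreal_plus) (use Ipos Phik_nonneg[of m "t (Suc m)"] e in auto)
      also have "ennreal (integral {s..t (Suc m)} (kk m)) = (\<integral>\<^sup>+r. ennreal (kk m r) * indicator {s<..<t (Suc m)} r \<partial>lborel)"
        by (rule int_nn[symmetric]) (rule s(2))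
      also have "\<dots> = (\<integral>\<^sup>+r. Kt r * indicator {s<..<t (Suc m)} r \<partial>lborel)"
      proof (rule nn_integral_cong)
        fix r :: real assume "r \<in> space lborel"
        show "ennreal (kk m r) * indicator {s<..<t (Suc m)} r = Kt r * indicator {s<..<t (Suc m)} r"
        proof (cases "r \<in> {s<..<t (Suc m)}")
          case True
          then have "t m < r" "r < t (Suc m)" using s by auto
          then show ?thesis using True by (simp add: Kt_edge)
        qed simp
      qed
      also have "ennreal (sqrt (Phik m (t (Suc m)) + e)) \<le> ennreal (sqrt e) + (\<integral>\<^sup>+r. Kt r * indicator {t (Suc m)<..} r \<partial>lborel)"
        using IH by (simp add: vertex_match)
      finally have "ennreal (sqrt (Phik m s + e)) \<le> ennreal (sqrt e) + ((\<integral>\<^sup>+r. Kt r * indicator {t (Suc m)<..} r \<partial>lborel)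
           + (\<integral>\<^sup>+r. Kt r * indicator {s<..<t (Suc m)} r \<partial>lborel))"
        by (simp add: ac_simps)
      also have "\<dots> \<le> ennreal (sqrt e) + (\<integral>\<^sup>+r. Kt r * indicator {s<..} r \<partial>lborel)"
        using Kt_split[OF s(2)] by (simp add: add_mono add.commute)
      finally show "ennreal (sqrt (Phik m s + e)) \<le> ennreal (sqrt e) + (\<integral>\<^sup>+r. Kt r * indicator {s<..} r \<partial>lborel)" .
    qed
  qed
  then show ?thesis by blast
qed

lemma PhiT_bound:
  assumes s: "0 < s"
  shows "ennreal (PhiT s) \<le> (\<integral>\<^sup>+r. Kt r * indicator {s<..} r \<partial>lborel) ^ 2"
proof -
  obtain k where k: "t k < s" "s \<le> t (Suc k)" using edge_ex s by blast
  have P: "PhiT s = Phik k s" using PhiT_edge[OF k] .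
  define Q where "Q = (\<integral>\<^sup>+r. Kt r * indicator {s<..} r \<partial>lborel)"
  have H: "ennreal (sqrt (Phik k s + e)) \<le> ennreal (sqrt e) + Q" if e: "0 < e" for e
  proof -
    obtain K where F: "\<forall>d m. K - d \<le> m \<longrightarrow> (\<forall>s. t m \<le> s \<longrightarrow> s \<le> t (Suc m) \<longrightarrow>
      ennreal (sqrt (Phik m s + e)) \<le> ennreal (sqrt e) + (\<integral>\<^sup>+r. Kt r * indicator {s<..} r \<partial>lborel))"
      using telescope[OF e] by blast
    have "K - K \<le> k" by simp
    with F have F2: "\<forall>s. t k \<le> s \<longrightarrow> s \<le> t (Suc k) \<longrightarrow>
      ennreal (sqrt (Phik k s + e)) \<le> ennreal (sqrt e) + (\<integral>\<^sup>+r. Kt r * indicator {s<..} r \<partial>lborel)" by blast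
    have tks: "t k \<le> s" using k(1) by simp
    show ?thesis unfolding Q_def using F2 tks k(2) by blast
  qed
  show ?thesis
  proof (cases Q)
    case top then show ?thesis unfolding Q_def[symmetric] by simp
  next
    case (real q)
    have Pn: "0 \<le> Phik k s" by (rule Phik_nonneg)
    have "sqrt (Phik k s) \<le> q"
    proof (rule ccontr)
      assume "\<not> sqrt (Phik k s) \<le> q"
      then have gt: "q < sqrt (Phik k s)" by simp
      define e where "e = ((sqrt (Phik k s) - q) / 2)^2"
      have ep: "0 < e" unfolding e_def using gt by simp
      have se: "sqrt e = (sqrt (Phik k s) - q) / 2" unfolding e_def using gt by simp
      have "ennreal (sqrt (Phik k s + e)) \<le> ennreal (sqrt e) + ennreal q" using H[OF ep] real by simp
      also have "\<dots> = ennreal (sqrt e + q)" by (rule ennreal_plus[symmetric]) (use real ep in auto)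
      finally have le: "ennreal (sqrt (Phik k s + e)) \<le> ennreal (sqrt e + q)" .
      have nn: "0 \<le> sqrt e + q" using real ep by simp
      have "sqrt (Phik k s + e) \<le> sqrt e + q" using iffD1[OF ennreal_le_iff[OF nn] le] .
      moreover have "sqrt (Phik k s) \<le> sqrt (Phik k s + e)" using ep by simp
      ultimately have "sqrt (Phik k s) \<le> sqrt e + q" by linarith
      then have "sqrt (Phik k s) \<le> (sqrt (Phik k s) - q) / 2 + q" by (simp only: se)
      then show False using gt by (simp add: field_simps)
    qed
    then have "(sqrt (Phik k s))^2 \<le> q ^ 2" by (rule power_mono) (simp add: Pn)
    then have "Phik k s \<le> q ^ 2" using Pn by simp
    then have "ennreal (Phik k s) \<le> ennreal (q ^ 2)" by (rule ennreal_leI)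
    then show ?thesis using P real unfolding Q_def[symmetric] by (simp add: ennreal_power)
  qed
qed

end

context rtree_u
begin

lemma PhiT_nonneg: "0 \<le> PhiT s"
  unfolding PhiT_def using g0_pos[of s] by (intro divide_nonneg_pos sum_nonneg) auto

lemma deriv_u:
  assumes r: "t k < r" "r < t (Suc k)" and w: "w \<in> Wk k"
  shows "deriv (\<lambda>x. u x w) r = deriv (fs k w) r"
proof -
  have d: "(fs k w has_real_derivative deriv (fs k w) r) (at r)"
    using fs_smooth w unfolding Wk_def by (intro smooth_DERIV) auto
  have "((\<lambda>x. u x w) has_real_derivative deriv (fs k w) r) (at r)"
  proof (rule has_field_derivative_transform_within_open[OF d, of "{t k<..<t (Suc k)}"])
    fix x assume "x \<in> {t k<..<t (Suc k)}"
    then show "fs k w x = u x w" using w fs_eq unfolding Wk_def by simp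
  qed (use r in auto)
  then show ?thesis by (rule DERIV_imp_deriv)
qed

lemma upper:
  fixes \<psi> :: "real \<Rightarrow> real" and m :: real
  assumes \<psi>m: "\<psi> \<in> borel_measurable (restrict_space borel {0<..})"
    and \<psi>n: "\<forall>s>0. 0 \<le> \<psi> s" and M: "Mconst T b \<psi> = ennreal m" and m0: "0 \<le> m"
  shows "tree_int T b (\<lambda>s w. \<psi> s * (u s w)^2) \<le> ennreal (4 * m) * tree_int T b (\<lambda>s w. (deriv (\<lambda>r. u r w) s)^2)"
proof -
  define \<psi>0 where "\<psi>0 s = \<psi> s * indicator {0<..} s" for s
  have [measurable]: "\<psi>0 \<in> borel_measurable borel"
  proof -
    have "(\<lambda>x. indicator {0<..} x *\<^sub>R \<psi> x) \<in> borel_measurable borel"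
      using \<psi>m by (subst (asm) borel_measurable_restrict_space_iff) auto
    then show ?thesis unfolding \<psi>0_def by (simp add: mult.commute)
  qed
  have \<psi>0n: "0 \<le> \<psi>0 s" for s using \<psi>n by (simp add: \<psi>0_def indicator_def)
  have PM: "(\<integral>\<^sup>+s. ennreal (\<psi>0 s * g0 T b s) * indicator {0<..\<tau>} s \<partial>lborel) * ennreal (Vf \<tau>) \<le> ennreal m"
    if \<tau>: "0 < \<tau>" for \<tau>
  proof -
    have "(\<integral>\<^sup>+s. ennreal (\<psi>0 s * g0 T b s) * indicator {0<..\<tau>} s \<partial>lborel) = (\<integral>\<^sup>+s\<in>{0<..\<tau>}. ennreal (\<psi> s * g0 T b s) \<partial>lborel)"
      by (intro nn_integral_cong) (auto simp: \<psi>0_def indicator_def)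
    moreover have "ennreal (Vf \<tau>) = (\<integral>\<^sup>+s\<in>{\<tau><..}. ennreal (1 / g0 T b s) \<partial>lborel)"
      using V_eq[of \<tau>] \<tau> by simp
    moreover have "(\<integral>\<^sup>+s\<in>{0<..\<tau>}. ennreal (\<psi> s * g0 T b s) \<partial>lborel) * (\<integral>\<^sup>+s\<in>{\<tau><..}. ennreal (1 / g0 T b s) \<partial>lborel) \<le> Mconst T b \<psi>"
      unfolding Mconst_def using \<tau> by (intro SUP_upper) simp
    ultimately show ?thesis using M by simp
  qed
  have "tree_int T b (\<lambda>s w. \<psi> s * (u s w)^2)
      \<le> (\<integral>\<^sup>+s. ennreal (\<psi>0 s * g0 T b s) * (\<integral>\<^sup>+r. Kt r * indicator {s<..} r \<partial>lborel) ^ 2 * indicator {0<..} s \<partial>lborel)"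
    unfolding tree_int_def
  proof (intro nn_integral_mono)
    fix s :: real assume "s \<in> space lborel"
    show "ennreal (\<Sum>w\<in>level T b s. \<psi> s * (u s w)\<^sup>2) * indicator {0<..} s
      \<le> ennreal (\<psi>0 s * g0 T b s) * (\<integral>\<^sup>+r. Kt r * indicator {s<..} r \<partial>lborel) ^ 2 * indicator {0<..} s"
    proof (cases "0 < s")
      case True
      have eq0: "(\<psi>0 s * g0 T b s) * PhiT s = \<psi> s * (\<Sum>w\<in>level T b s. (u s w)\<^sup>2)"
        unfolding PhiT_def \<psi>0_def using True g0_pos[of s] by (simp add: field_simps)
      have eq: "(\<Sum>w\<in>level T b s. \<psi> s * (u s w)\<^sup>2) = (\<psi>0 s * g0 T b s) * PhiT s"
        unfolding eq0 by (simp add: sum_distrib_left)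
      have "ennreal ((\<psi>0 s * g0 T b s) * PhiT s) = ennreal (\<psi>0 s * g0 T b s) * ennreal (PhiT s)"
        by (rule ennreal_mult) (use \<psi>0n g0_pos[of s] PhiT_nonneg[of s] in auto)
      also have "\<dots> \<le> ennreal (\<psi>0 s * g0 T b s) * (\<integral>\<^sup>+r. Kt r * indicator {s<..} r \<partial>lborel) ^ 2"
        by (intro mult_left_mono PhiT_bound True) simp
      finally show ?thesis using True eq by simp
    qed simp
  qed
  also have "\<dots> \<le> ennreal (4 * m) * (\<integral>\<^sup>+r. ennreal (g0 T b r) * Kt r ^ 2 * indicator {0<..} r \<partial>lborel)"
    by (rule B_final[OF _ m0 PM]) measurable
  also have "(\<integral>\<^sup>+r. ennreal (g0 T b r) * Kt r ^ 2 * indicator {0<..} r \<partial>lborel) \<le> tree_int T b (\<lambda>s w. (deriv (\<lambda>r. u r w) s)^2)"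
    unfolding tree_int_def
  proof (intro nn_integral_mono)
    fix r :: real assume "r \<in> space lborel"
    show "ennreal (g0 T b r) * Kt r ^ 2 * indicator {0<..} r \<le> ennreal (\<Sum>w\<in>level T b r. (deriv (\<lambda>r. u r w) r)\<^sup>2) * indicator {0<..} r"
    proof (cases "\<exists>k. t k < r \<and> r < t (Suc k)")
      case True
      then obtain k where k: "t k < r" "r < t (Suc k)" by blast
      have r0: "0 < r" using k t_nonneg[of k] by simp
      have g: "g0 T b r = gk k" using k by (intro g0_edge) auto
      have lv: "level T b r = Wk k" unfolding Wk_def using k by (intro level_edge) auto
      have "ennreal (g0 T b r) * Kt r ^ 2 = ennreal (gk k) * ennreal (kk k r) ^ 2" using g Kt_edge[OF k] by simp
      also have "\<dots> = ennreal (gk k * (kk k r) ^ 2)" using gk_pos[of k] kk_nonneg[of k r]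
        by (simp add: ennreal_mult ennreal_power)
      also have "gk k * (kk k r) ^ 2 = Gk k r"
      proof -
        have "0 \<le> Gk k r / gk k" unfolding Gk_def using gk_pos[of k] by (intro divide_nonneg_pos sum_nonneg) auto
        then show ?thesis unfolding kk_def using gk_pos[of k] by simp
      qed
      also have "Gk k r = (\<Sum>w\<in>level T b r. (deriv (\<lambda>r. u r w) r)\<^sup>2)"
        unfolding Gk_def lv using deriv_u[OF k] by simp
      finally show ?thesis using r0 by simp
    next
      case False
      then show ?thesis by (simp add: Kt_other)
    qed
  qed
  finally show ?thesis by (simp add: mult_left_mono)
qed

end

lemma smooth_by_derivs:
  assumes D0: "D 0 = f" and DS: "\<And>n x. (D n has_real_derivative D (Suc n) x) (at x)"
  shows "smooth_fun f"
proof -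
  have eq: "(deriv ^^ n) f = D n" for n
  proof (induction n)
    case 0 then show ?case using D0 by simp
  next
    case (Suc n)
    have "(deriv ^^ Suc n) f = deriv (D n)" using Suc by simp
    also have "\<dots> = D (Suc n)" by (rule ext) (rule DERIV_imp_deriv[OF DS])
    finally show ?case .
  qed
  show ?thesis unfolding smooth_fun_def
  proof (intro allI)
    fix n x
    show "(deriv ^^ n) f differentiable at x" unfolding eq using DS[of n x]
      by (auto simp: real_differentiable_def)
  qed
qed

lemma smooth_const: "smooth_fun (\<lambda>x. c)"
  by (rule smooth_by_derivs[where D = "\<lambda>n. if n = 0 then (\<lambda>x. c) else (\<lambda>x. 0)"]) auto

lemma smooth_affine: "smooth_fun (\<lambda>x. a + c * x)"
proof (rule smooth_by_derivs[where D = "\<lambda>n. if n = 0 then (\<lambda>x. a + c * x) else if n = 1 then (\<lambda>x. c) else (\<lambda>x. 0)"])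
  fix n x
  show "((if n = 0 then (\<lambda>x. a + c * x) else if n = 1 then (\<lambda>x. c) else (\<lambda>x. 0)) has_real_derivative
        (if Suc n = 0 then (\<lambda>x. a + c * x) else if Suc n = 1 then (\<lambda>x. c) else (\<lambda>x. 0)) x) (at x)"
    by (cases "n = 0") (auto intro!: derivative_eq_intros)
qed simp

definition sig :: "real \<Rightarrow> real" where "sig y = exp y / (1 + exp y)"
definition sp :: "real \<Rightarrow> real" where "sp y = ln (1 + exp y)"

lemma sp_deriv: "(sp has_real_derivative sig y) (at y)"
  unfolding sp_def sig_def
  by (rule derivative_eq_intros refl | simp add: add_pos_pos)+

lemma sig_deriv: "(sig has_real_derivative sig y * (1 - sig y)) (at y)"
proof -
  have p: "0 < 1 + exp y" by (simp add: add_pos_pos)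
  have "(sig has_real_derivative (exp y * (1 + exp y) - exp y * exp y) / (1 + exp y)^2) (at y)"
    unfolding sig_def using p
    by (auto intro!: derivative_eq_intros simp: power2_eq_square)
  moreover have "(exp y * (1 + exp y) - exp y * exp y) / (1 + exp y)^2 = sig y * (1 - sig y)"
    unfolding sig_def using p by (simp add: field_simps power2_eq_square)
  ultimately show ?thesis by simp
qed

fun Qp :: "nat \<Rightarrow> real poly" where
  "Qp 0 = [:0, 1:]"
| "Qp (Suc n) = pderiv (Qp n) * [:0, 1, -1:]"

lemma sigpoly_deriv: "((\<lambda>y. poly (Qp n) (sig y)) has_real_derivative poly (Qp (Suc n)) (sig y)) (at y)"
proof -
  have d: "((\<lambda>y. poly (Qp n) (sig y)) has_real_derivative poly (pderiv (Qp n)) (sig y) * (sig y * (1 - sig y))) (at y)"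
    by (rule DERIV_chain2[OF poly_DERIV sig_deriv])
  have eq: "poly (Qp (Suc n)) (sig y) = poly (pderiv (Qp n)) (sig y) * (sig y * (1 - sig y))"
    by (simp add: algebra_simps)
  show ?thesis unfolding eq by (rule d)
qed

lemma smooth_sp: "smooth_fun (\<lambda>x. c - d * sp (\<nu> * (x - \<tau>)))"
proof (rule smooth_by_derivs[where D = "\<lambda>n. if n = 0 then (\<lambda>x. c - d * sp (\<nu> * (x - \<tau>)))
          else (\<lambda>x. - d * \<nu> ^ n * poly (Qp (n - 1)) (sig (\<nu> * (x - \<tau>))))"])
  fix n x
  show "((if n = 0 then (\<lambda>x. c - d * sp (\<nu> * (x - \<tau>))) else (\<lambda>x. - d * \<nu> ^ n * poly (Qp (n - 1)) (sig (\<nu> * (x - \<tau>)))))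
     has_real_derivative (if Suc n = 0 then (\<lambda>x. c - d * sp (\<nu> * (x - \<tau>))) else (\<lambda>x. - d * \<nu> ^ Suc n * poly (Qp (Suc n - 1)) (sig (\<nu> * (x - \<tau>))))) x) (at x)"
  proof (cases n)
    case 0
    have i: "((\<lambda>x. \<nu> * (x - \<tau>)) has_real_derivative \<nu>) (at x)" by (auto intro!: derivative_eq_intros)
    have "((\<lambda>x. c - d * sp (\<nu> * (x - \<tau>))) has_real_derivative 0 - d * (sig (\<nu> * (x - \<tau>)) * \<nu>)) (at x)"
      by (intro DERIV_diff DERIV_const DERIV_cmult DERIV_chain2[OF sp_deriv i])
    then show ?thesis using 0 by (simp add: mult_ac)
  next
    case (Suc m)
    have i: "((\<lambda>x. \<nu> * (x - \<tau>)) has_real_derivative \<nu>) (at x)" by (auto intro!: derivative_eq_intros)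
    have "((\<lambda>x. - d * \<nu> ^ Suc m * poly (Qp m) (sig (\<nu> * (x - \<tau>)))) has_real_derivative
        - d * \<nu> ^ Suc m * (poly (Qp (Suc m)) (sig (\<nu> * (x - \<tau>))) * \<nu>)) (at x)"
      by (intro DERIV_cmult DERIV_chain2[OF sigpoly_deriv i])
    then show ?thesis using Suc by (simp add: mult_ac)
  qed
qed simp

lemma sp_nonneg: "0 \<le> sp y" unfolding sp_def by simp
lemma sp_ge: "y \<le> sp y"
proof -
  have p: "0 < 1 + exp y" by (simp add: add_pos_nonneg)
  have "exp y \<le> 1 + exp y" by simp
  then have "ln (exp y) \<le> ln (1 + exp y)" using p by (subst ln_le_cancel_iff) auto
  then show ?thesis unfolding sp_def by simp
qed
lemma sp_mono: "x \<le> y \<Longrightarrow> sp x \<le> sp y" unfolding sp_def by (simp add: add_pos_pos)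
lemma sp_0: "sp 0 = ln 2" unfolding sp_def by simp
lemma sig_le1: "sig y \<le> 1" unfolding sig_def by (simp add: add_pos_pos)
lemma sig_pos: "0 < sig y" unfolding sig_def by (simp add: add_pos_pos)

definition clamp :: "real \<Rightarrow> real \<Rightarrow> real \<Rightarrow> real" where "clamp a c s = max a (min s c)"

lemma clamp_cont: "continuous_on A (clamp a c)"
  unfolding clamp_def by (intro continuous_intros)

context rtree
begin

definition Lf :: "real \<Rightarrow> real \<Rightarrow> real \<Rightarrow> real" where "Lf \<nu> \<tau> x = sp (\<nu> * (x - \<tau>)) / \<nu>"

definition hj :: "nat \<Rightarrow> nat \<Rightarrow> real \<Rightarrow> real \<Rightarrow> real \<Rightarrow> real" where
  "hj j K \<nu> \<tau> x = (Vf (t (Suc j)) - Vf (t K)) + (Lf \<nu> \<tau> (t (Suc j)) - Lf \<nu> \<tau> x) / gk j"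

definition htest :: "nat \<Rightarrow> nat \<Rightarrow> real \<Rightarrow> real \<Rightarrow> real \<Rightarrow> real" where
  "htest j K \<nu> \<tau> s = hj j K \<nu> \<tau> (clamp (t j) (t (Suc j)) s) + Vf (clamp (t (Suc j)) (t K) s) - Vf (t (Suc j))"

lemma hj_smooth: "0 < \<nu> \<Longrightarrow> smooth_fun (hj j K \<nu> \<tau>)"
proof -
  assume \<nu>: "0 < \<nu>"
  have eq: "hj j K \<nu> \<tau> = (\<lambda>x. ((Vf (t (Suc j)) - Vf (t K)) + Lf \<nu> \<tau> (t (Suc j)) / gk j) - (1 / (\<nu> * gk j)) * sp (\<nu> * (x - \<tau>)))"
    unfolding hj_def Lf_def using \<nu> gk_pos[of j] by (auto simp: fun_eq_iff field_simps)
  show ?thesis unfolding eq by (rule smooth_sp)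
qed

lemma hj_deriv: "0 < \<nu> \<Longrightarrow> (hj j K \<nu> \<tau> has_real_derivative - sig (\<nu> * (x - \<tau>)) / gk j) (at x)"
proof -
  assume \<nu>: "0 < \<nu>"
  have i: "((\<lambda>x. \<nu> * (x - \<tau>)) has_real_derivative \<nu>) (at x)" by (auto intro!: derivative_eq_intros)
  have "((\<lambda>x. sp (\<nu> * (x - \<tau>)) / \<nu>) has_real_derivative (sig (\<nu> * (x - \<tau>)) * \<nu>) / \<nu>) (at x)"
    by (rule DERIV_cdivide) (rule DERIV_chain2[OF sp_deriv i])
  then have L: "(Lf \<nu> \<tau> has_real_derivative sig (\<nu> * (x - \<tau>))) (at x)"
    using \<nu> unfolding Lf_def[abs_def] by simp
  have "(hj j K \<nu> \<tau> has_real_derivative 0 + (0 - sig (\<nu> * (x - \<tau>))) / gk j) (at x)"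
    unfolding hj_def[abs_def] by (intro DERIV_add DERIV_const DERIV_cdivide DERIV_diff L)
  then show ?thesis by simp
qed

lemma Lf_mono: "0 < \<nu> \<Longrightarrow> x \<le> y \<Longrightarrow> Lf \<nu> \<tau> x \<le> Lf \<nu> \<tau> y"
  unfolding Lf_def by (intro divide_right_mono sp_mono) auto

lemma Lf_nonneg: "0 < \<nu> \<Longrightarrow> 0 \<le> Lf \<nu> \<tau> x"
  unfolding Lf_def by (simp add: sp_nonneg)

lemma Lf_ge: "0 < \<nu> \<Longrightarrow> x - \<tau> \<le> Lf \<nu> \<tau> x"
proof -
  assume \<nu>: "0 < \<nu>"
  have "\<nu> * (x - \<tau>) \<le> sp (\<nu> * (x - \<tau>))" by (rule sp_ge)
  then show ?thesis unfolding Lf_def using \<nu> by (simp add: field_simps)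
qed

lemma Lf_tau: "Lf \<nu> \<tau> \<tau> = ln 2 / \<nu>" unfolding Lf_def by (simp add: sp_0)

context
  fixes j K :: nat and \<nu> \<tau> :: real
  assumes jt: "t j < \<tau>" "\<tau> \<le> t (Suc j)" and KK: "Suc (Suc j) \<le> K" and \<nu>: "0 < \<nu>"
begin

lemma tjK: "t (Suc j) < t K" using KK by (simp add: t_less_iff)
lemma tj1: "t j < t (Suc j)" by (rule t_Suc)

lemma h_left: "s \<le> t j \<Longrightarrow> htest j K \<nu> \<tau> s = hj j K \<nu> \<tau> (t j)"
  unfolding htest_def clamp_def using tj1 tjK by (simp add: max_def min_def)

lemma h_mid: "t j \<le> s \<Longrightarrow> s \<le> t (Suc j) \<Longrightarrow> htest j K \<nu> \<tau> s = hj j K \<nu> \<tau> s"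
  unfolding htest_def clamp_def using tj1 tjK by (simp add: max_def min_def)

lemma h_right: "t (Suc j) \<le> s \<Longrightarrow> s \<le> t K \<Longrightarrow> htest j K \<nu> \<tau> s = hj j K \<nu> \<tau> (t (Suc j)) + Vf s - Vf (t (Suc j))"
  unfolding htest_def clamp_def using tj1 tjK by (simp add: max_def min_def)

lemma hj_top: "hj j K \<nu> \<tau> (t (Suc j)) = Vf (t (Suc j)) - Vf (t K)"
  unfolding hj_def by simp

lemma h_far: "t K \<le> s \<Longrightarrow> htest j K \<nu> \<tau> s = 0"
  unfolding htest_def clamp_def using tj1 tjK by (simp add: max_def min_def hj_top)

lemma W_pos: "0 < Vf (t (Suc j)) - Vf (t K)"
proof -
  have "Vf (t (Suc j)) = Vf (t (Suc (Suc j))) + (t (Suc (Suc j)) - t (Suc j)) / gk (Suc j)"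
    using t_Suc[of "Suc j"] by (intro V_edge) auto
  moreover have "0 < (t (Suc (Suc j)) - t (Suc j)) / gk (Suc j)" using t_Suc[of "Suc j"] gk_pos by simp
  moreover have "Vf (t K) \<le> Vf (t (Suc (Suc j)))" using KK by (intro V_mono t_nonneg) (simp add: t_le_iff)
  ultimately show ?thesis by simp
qed

lemma h_C0: "C0inf T b (\<lambda>s w. htest j K \<nu> \<tau> s)"
  unfolding C0inf_def
proof (intro conjI allI impI)
  fix k :: nat and w :: "nat list"
  show "\<exists>f. smooth_fun f \<and> (\<forall>s. T k \<le> ereal s \<and> ereal s \<le> T (Suc k) \<longrightarrow>
      f s = (if ereal s = T k then htest j K \<nu> \<tau> s else htest j K \<nu> \<tau> s))"
  proof -
    have "\<exists>f. smooth_fun f \<and> (\<forall>s. t k \<le> s \<and> s \<le> t (Suc k) \<longrightarrow> f s = htest j K \<nu> \<tau> s)"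
    proof (cases "k < j")
      case True
      then have "t (Suc k) \<le> t j" by (simp add: t_le_iff)
      then show ?thesis using h_left by (intro exI[of _ "\<lambda>x. hj j K \<nu> \<tau> (t j)"]) (auto simp: smooth_const)
    next
      case False
      show ?thesis
      proof (cases "k = j")
        case True
        then show ?thesis using h_mid hj_smooth[OF \<nu>] by (intro exI[of _ "hj j K \<nu> \<tau>"]) auto
      next
        case False
        with \<open>\<not> k < j\<close> have kj: "Suc j \<le> k" by simp
        show ?thesis
        proof (cases "k < K")
          case True
          define a where "a = hj j K \<nu> \<tau> (t (Suc j)) - Vf (t (Suc j)) + Vf (t k) + t k / gk k"
          define c where "c = - 1 / gk k"
          show ?thesis
          proof (intro exI[of _ "\<lambda>x. a + c * x"] conjI allI impI)
            show "smooth_fun (\<lambda>x. a + c * x)" by (rule smooth_affine)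
            fix s assume s: "t k \<le> s \<and> s \<le> t (Suc k)"
            have s1: "t (Suc j) \<le> s" using s kj t_le[of "Suc j" k] by simp
            have s2: "s \<le> t K" using s True t_le[of "Suc k" K] by simp
            have V: "Vf (t k) = Vf s + (s - t k) / gk k" using s by (intro V_edge) auto
            have V': "Vf s = Vf (t k) - (s - t k) / gk k" using V by simp
            show "a + c * s = htest j K \<nu> \<tau> s"
              unfolding h_right[OF s1 s2] a_def c_def V' using gk_pos[of k] by (simp add: field_simps)
          qed
        next
          case False
          then have "t K \<le> t k" by (simp add: t_le_iff)
          then show ?thesis using h_far by (intro exI[of _ "\<lambda>x. 0"]) (auto simp: smooth_const)
        qed
      qed
    qed
    then show ?thesis by (simp add: T_t)
  qed
next
  show "\<exists>R. \<forall>s w. R < s \<longrightarrow> w \<in> level T b s \<longrightarrow> htest j K \<nu> \<tau> s = 0"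
    using h_far by (intro exI[of _ "t K"]) auto
qed

lemma h_tau: "htest j K \<nu> \<tau> \<tau> = hj j K \<nu> \<tau> \<tau>" using h_mid jt by simp

lemma h_tau_ge_W: "Vf (t (Suc j)) - Vf (t K) \<le> htest j K \<nu> \<tau> \<tau>"
proof -
  have "Lf \<nu> \<tau> \<tau> \<le> Lf \<nu> \<tau> (t (Suc j))" using jt by (intro Lf_mono \<nu>) simp
  then show ?thesis unfolding h_tau hj_def using gk_pos[of j] by simp
qed

lemma h_tau_pos: "0 < htest j K \<nu> \<tau> \<tau>" using h_tau_ge_W W_pos by simp

lemma h_ge_tau: "s \<le> \<tau> \<Longrightarrow> htest j K \<nu> \<tau> \<tau> \<le> htest j K \<nu> \<tau> s"
proof -
  assume s: "s \<le> \<tau>"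
  have "hj j K \<nu> \<tau> \<tau> \<le> hj j K \<nu> \<tau> (max s (t j))"
  proof -
    have "Lf \<nu> \<tau> (max s (t j)) \<le> Lf \<nu> \<tau> \<tau>" using s jt by (intro Lf_mono \<nu>) simp
    then show ?thesis unfolding hj_def using gk_pos[of j] by (simp add: divide_right_mono)
  qed
  also have "hj j K \<nu> \<tau> (max s (t j)) = htest j K \<nu> \<tau> s"
  proof (cases "s \<le> t j")
    case True then show ?thesis using h_left by (simp add: max_def)
  next
    case False then show ?thesis using h_mid s jt by (simp add: max_def)
  qed
  finally show ?thesis unfolding h_tau .
qed

lemma h0_bound: "htest j K \<nu> \<tau> 0 \<le> htest j K \<nu> \<tau> \<tau> + ln 2 / \<nu>"
proof -
  have h0: "htest j K \<nu> \<tau> 0 = hj j K \<nu> \<tau> (t j)" using h_left t_nonneg[of j] by simp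
  have "hj j K \<nu> \<tau> (t j) - hj j K \<nu> \<tau> \<tau> = (Lf \<nu> \<tau> \<tau> - Lf \<nu> \<tau> (t j)) / gk j"
    unfolding hj_def by (simp add: diff_divide_distrib)
  also have "\<dots> \<le> Lf \<nu> \<tau> \<tau> / gk j" using Lf_nonneg[OF \<nu>, of \<tau> "t j"] gk_pos[of j] by (simp add: divide_right_mono)
  also have "\<dots> \<le> Lf \<nu> \<tau> \<tau>"
  proof -
    have "Lf \<nu> \<tau> \<tau> * 1 \<le> Lf \<nu> \<tau> \<tau> * gk j" by (rule mult_left_mono[OF gk_ge1 Lf_nonneg[OF \<nu>]])
    then show ?thesis using gk_pos[of j] by (simp add: divide_le_eq)
  qed
  finally show ?thesis using h0 h_tau by (simp add: Lf_tau)
qed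

lemma h_tau_lower: "Vf \<tau> - Vf (t K) - ln 2 / \<nu> \<le> htest j K \<nu> \<tau> \<tau>"
proof -
  have V: "Vf \<tau> = Vf (t (Suc j)) + (t (Suc j) - \<tau>) / gk j" using jt by (intro V_edge) auto
  have "(t (Suc j) - \<tau>) - ln 2 / \<nu> \<le> Lf \<nu> \<tau> (t (Suc j)) - Lf \<nu> \<tau> \<tau>"
    using Lf_ge[OF \<nu>, of "t (Suc j)" \<tau>] by (simp add: Lf_tau)
  then have "((t (Suc j) - \<tau>) - ln 2 / \<nu>) / gk j \<le> (Lf \<nu> \<tau> (t (Suc j)) - Lf \<nu> \<tau> \<tau>) / gk j"
    using gk_pos[of j] by (simp add: divide_right_mono)
  moreover have "ln 2 / \<nu> / gk j \<le> ln 2 / \<nu>"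
    using gk_ge1[of j] \<nu> by (simp add: divide_le_eq field_simps)
  ultimately show ?thesis unfolding h_tau hj_def V by (simp add: diff_divide_distrib)
qed

end

end

context rtree
begin

lemma card_level: "0 < s \<Longrightarrow> real (card (level T b s)) = g0 T b s"
proof -
  assume s: "0 < s"
  then obtain k where k: "t k < s" "s \<le> t (Suc k)" using edge_ex by blast
  then show ?thesis using level_edge[OF k] g0_edge[OF k] card_words[of k] by simp
qed

lemma not_vertex: "t k < x \<Longrightarrow> x < t (Suc k) \<Longrightarrow> x \<notin> range t"
proof
  assume x: "t k < x" "x < t (Suc k)" and "x \<in> range t"
  then obtain i where i: "x = t i" by blast
  then have "k < i" "i < Suc k" using x by (simp_all add: t_less_iff)
  then show False by simp
qed

lemma nonvertex_edge: "0 < x \<Longrightarrow> x \<notin> range t \<Longrightarrow> \<exists>k. t k < x \<and> x < t (Suc k)"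
proof -
  assume x: "0 < x" "x \<notin> range t"
  then obtain k where k: "t k < x" "x \<le> t (Suc k)" using edge_ex by blast
  then have "x \<noteq> t (Suc k)" using x by auto
  then show ?thesis using k by force
qed

end

locale ltest = rtree +
  fixes j K :: nat and \<nu> \<tau> :: real
  assumes jt1: "t j < \<tau>" and jt2: "\<tau> \<le> t (Suc j)" and KK: "Suc (Suc j) \<le> K" and nu: "0 < \<nu>"
begin

abbreviation "h \<equiv> htest j K \<nu> \<tau>"

lemmas hl = h_left[OF jt1 jt2 KK nu] and hm = h_mid[OF jt1 jt2 KK nu] and hr = h_right[OF jt1 jt2 KK nu]
  and hf = h_far[OF jt1 jt2 KK nu] and tjK' = tjK[OF jt1 jt2 KK nu]

lemma h_deriv:
  assumes s: "t k < s" "s < t (Suc k)"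
  shows "\<exists>D. (h has_real_derivative D) (at s) \<and> D \<le> 0 \<and> gk k * D^2 \<le> - D \<and> (K \<le> k \<longrightarrow> D = 0)"
proof -
  let ?U = "{t k<..<t (Suc k)}"
  have sU: "s \<in> ?U" using s by simp
  show ?thesis
  proof (cases "k < j")
    case True
    then have le: "t (Suc k) \<le> t j" by (simp add: t_le_iff)
    have "(h has_real_derivative 0) (at s)"
    proof (rule has_field_derivative_transform_within_open[OF DERIV_const[of "hj j K \<nu> \<tau> (t j)"] _ sU])
      fix x assume "x \<in> ?U" then show "hj j K \<nu> \<tau> (t j) = h x" using hl le by simp
    qed simp
    then show ?thesis using True KK by auto
  next
    case False
    show ?thesis
    proof (cases "k = j")
      case True
      define D where "D = - sig (\<nu> * (s - \<tau>)) / gk j"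
      have "(h has_real_derivative D) (at s)" unfolding D_def
      proof (rule has_field_derivative_transform_within_open[OF hj_deriv[OF nu] _ sU])
        fix x assume "x \<in> ?U" then show "hj j K \<nu> \<tau> x = h x" using hm True by simp
      qed simp
      moreover have "D \<le> 0" unfolding D_def using sig_pos gk_pos[of j] by (simp add: less_imp_le)
      moreover have "gk k * D^2 \<le> - D"
      proof -
        have g: "0 < gk j" by (rule gk_pos)
        have "gk k * D^2 = sig (\<nu> * (s - \<tau>)) * sig (\<nu> * (s - \<tau>)) / gk j"
          unfolding D_def True using g by (simp add: power2_eq_square)
        also have "\<dots> \<le> 1 * sig (\<nu> * (s - \<tau>)) / gk j"
          using g sig_le1 sig_pos by (intro divide_right_mono mult_right_mono) (auto simp: less_imp_le)
        finally show ?thesis unfolding D_def by simp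
      qed
      ultimately show ?thesis using True KK by auto
    next
      case False
      with \<open>\<not> k < j\<close> have kj: "Suc j \<le> k" by simp
      show ?thesis
      proof (cases "k < K")
        case True
        have le1: "t (Suc j) \<le> t k" using kj by (simp add: t_le_iff)
        have le2: "t (Suc k) \<le> t K" using True by (simp add: t_le_iff)
        have d: "((\<lambda>x. hj j K \<nu> \<tau> (t (Suc j)) + Vf x - Vf (t (Suc j))) has_real_derivative 0 + (- 1 / gk k) - 0) (at s)"
          by (intro DERIV_diff DERIV_add DERIV_const V_deriv s)
        then have d: "((\<lambda>x. hj j K \<nu> \<tau> (t (Suc j)) + Vf x - Vf (t (Suc j))) has_real_derivative - 1 / gk k) (at s)"
          by simp
        have "(h has_real_derivative - 1 / gk k) (at s)"
        proof (rule has_field_derivative_transform_within_open[OF d _ sU])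
          fix x assume "x \<in> ?U" then show "hj j K \<nu> \<tau> (t (Suc j)) + Vf x - Vf (t (Suc j)) = h x"
            using hr le1 le2 by simp
        qed simp
        moreover have "gk k * (- 1 / gk k)^2 \<le> - (- 1 / gk k)" using gk_pos[of k] by (simp add: power2_eq_square)
        ultimately show ?thesis using True gk_pos[of k] by (intro exI[of _ "- 1 / gk k"]) auto
      next
        case False
        then have le: "t K \<le> t k" by (simp add: t_le_iff)
        have "(h has_real_derivative 0) (at s)"
        proof (rule has_field_derivative_transform_within_open[OF DERIV_const[of 0] _ sU])
          fix x assume "x \<in> ?U" then show "0 = h x" using hf le by simp
        qed simp
        then show ?thesis by auto
      qed
    qed
  qed
qed

lemma h_cont: "continuous_on A h"
proof -
  have hjc: "continuous_on UNIV (hj j K \<nu> \<tau>)"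
    by (rule continuous_at_imp_continuous_on) (auto intro: DERIV_isCont hj_deriv[OF nu])
  have c1: "continuous_on UNIV (\<lambda>s. hj j K \<nu> \<tau> (clamp (t j) (t (Suc j)) s))"
    using continuous_on_compose2[OF hjc clamp_cont] by auto
  have img: "clamp (t (Suc j)) (t K) ` UNIV \<subseteq> {0..}"
    using t_nonneg[of "Suc j"] by (auto simp: clamp_def)
  have c2: "continuous_on UNIV (\<lambda>s. Vf (clamp (t (Suc j)) (t K) s))"
    using continuous_on_compose2[OF V_cont clamp_cont img] by auto
  have "continuous_on UNIV h" unfolding htest_def using c1 c2 by (intro continuous_intros)
  then show ?thesis by (rule continuous_on_subset) simp
qed

lemma energy: "tree_int T b (\<lambda>s w. (deriv (\<lambda>r. h r) s)^2) \<le> ennreal (h 0)"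
proof -
  define f where "f x = (if x \<in> range t then 0 else - deriv h x)" for x
  obtain S where S: "finite S" "\<And>x. 0 < x \<Longrightarrow> x < t K \<Longrightarrow> x \<notin> S \<Longrightarrow> \<exists>k. t k < x \<and> x < t (Suc k)"
    using vertices_finite[of "t K"] by blast
  have tK0: "0 \<le> t K" by (rule t_nonneg)
  have F: "(\<integral>\<^sup>+x. ennreal (f x) * indicator {0<..<t K} x \<partial>lborel) = ennreal ((- h (t K)) - (- h 0))"
  proof (rule ftc_nn[OF tK0 S(1)])
    show "continuous_on {0..t K} (\<lambda>x. - h x)" by (intro continuous_intros h_cont)
  next
    fix x assume x: "x \<in> {0<..<t K} - S"
    then obtain k where k: "t k < x" "x < t (Suc k)" using S(2) by auto
    obtain D where D: "(h has_real_derivative D) (at x)" using h_deriv[OF k] by blast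
    have "f x = - D" unfolding f_def using not_vertex[OF k] DERIV_imp_deriv[OF D] by simp
    then show "((\<lambda>x. - h x) has_real_derivative f x) (at x)" using DERIV_minus[OF D] by simp
  next
    fix x assume x: "x \<in> {0<..<t K}"
    show "0 \<le> f x"
    proof (cases "x \<in> range t")
      case True then show ?thesis by (simp add: f_def)
    next
      case False
      then obtain k where k: "t k < x" "x < t (Suc k)" using nonvertex_edge x by auto
      obtain D where D: "(h has_real_derivative D) (at x)" "D \<le> 0" using h_deriv[OF k] by blast
      then show ?thesis unfolding f_def using False DERIV_imp_deriv[OF D(1)] by simp
    qed
  qed
  have "tree_int T b (\<lambda>s w. (deriv (\<lambda>r. h r) s)^2) \<le> (\<integral>\<^sup>+x. ennreal (f x) * indicator {0<..<t K} x \<partial>lborel)"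
    unfolding tree_int_def
  proof (rule nn_integral_mono_AE)
    have "AE x in lborel. x \<notin> range t"
      by (rule AE_not_in) (rule countable_imp_null_set_lborel, simp)
    then show "AE x in lborel. ennreal (\<Sum>w\<in>level T b x. (deriv (\<lambda>r. h r) x)\<^sup>2) * indicator {0<..} x
        \<le> ennreal (f x) * indicator {0<..<t K} x"
    proof eventually_elim
      fix x assume xr: "x \<notin> range t"
      show "ennreal (\<Sum>w\<in>level T b x. (deriv (\<lambda>r. h r) x)\<^sup>2) * indicator {0<..} x \<le> ennreal (f x) * indicator {0<..<t K} x"
      proof (cases "0 < x")
        case True
        then obtain k where k: "t k < x" "x < t (Suc k)" using nonvertex_edge xr by auto
        obtain D where D: "(h has_real_derivative D) (at x)" "D \<le> 0" "gk k * D^2 \<le> - D" "K \<le> k \<longrightarrow> D = 0"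
          using h_deriv[OF k] by blast
        have dd: "deriv (\<lambda>r. h r) x = D" using DERIV_imp_deriv[OF D(1)] by simp
        have sum: "(\<Sum>w\<in>level T b x. (deriv (\<lambda>r. h r) x)\<^sup>2) = gk k * D^2"
          using level_edge[of k x] card_words[of k] k dd by simp
        show ?thesis
        proof (cases "x < t K")
          case True
          have "gk k * D^2 \<le> f x" unfolding f_def using xr dd D(3) by simp
          then show ?thesis using True \<open>0 < x\<close> sum by (simp add: ennreal_leI)
        next
          case False
          then have "t K \<le> x" by simp
          then have "K \<le> k" using k by (metis less_Suc_eq_le less_le_trans not_le t_less_iff)
          then have z: "(\<Sum>w\<in>level T b x. (deriv (\<lambda>r. h r) x)\<^sup>2) = 0" using D(4) sum by simp
          show ?thesis by (simp only: z) simp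
        qed
      qed simp
    qed
  qed
  also have "\<dots> = ennreal (h 0)" using F hf[of "t K"] by simp
  finally show ?thesis .
qed

lemma lhs_bound:
  assumes \<psi>n: "\<forall>s>0. 0 \<le> \<psi> s"
    and \<psi>m: "(\<lambda>s. ennreal (\<psi> s * g0 T b s) * indicator {0<..\<tau>} s) \<in> borel_measurable lborel"
  shows "(\<integral>\<^sup>+s\<in>{0<..\<tau>}. ennreal (\<psi> s * g0 T b s) \<partial>lborel) * ennreal ((h \<tau>)^2)
    \<le> tree_int T b (\<lambda>s w. \<psi> s * (h s)^2)"
proof -
  have ht: "0 < h \<tau>" by (rule h_tau_pos[OF jt1 jt2 KK nu])
  have "(\<integral>\<^sup>+s\<in>{0<..\<tau>}. ennreal (\<psi> s * g0 T b s) \<partial>lborel) * ennreal ((h \<tau>)^2)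
      = (\<integral>\<^sup>+s. ennreal (\<psi> s * g0 T b s) * indicator {0<..\<tau>} s * ennreal ((h \<tau>)^2) \<partial>lborel)"
    by (rule nn_integral_multc[symmetric]) (rule \<psi>m)
  also have "\<dots> \<le> tree_int T b (\<lambda>s w. \<psi> s * (h s)^2)"
    unfolding tree_int_def
  proof (intro nn_integral_mono)
    fix s :: real assume "s \<in> space lborel"
    show "ennreal (\<psi> s * g0 T b s) * indicator {0<..\<tau>} s * ennreal ((h \<tau>)\<^sup>2)
        \<le> ennreal (\<Sum>w\<in>level T b s. \<psi> s * (h s)\<^sup>2) * indicator {0<..} s"
    proof (cases "s \<in> {0<..\<tau>}")
      case True
      then have s0: "0 < s" and sl: "s \<le> \<tau>" by auto
      have hs: "h \<tau> \<le> h s" by (rule h_ge_tau[OF jt1 jt2 KK nu sl])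
      have "(h \<tau>)^2 \<le> (h s)^2" using hs ht by (intro power_mono) auto
      then have "\<psi> s * g0 T b s * (h \<tau>)^2 \<le> \<psi> s * g0 T b s * (h s)^2"
        using \<psi>n s0 g0_pos[of s] by (intro mult_left_mono) auto
      also have "\<dots> = (\<Sum>w\<in>level T b s. \<psi> s * (h s)\<^sup>2)" using card_level[OF s0] by simp
      finally have le: "\<psi> s * g0 T b s * (h \<tau>)^2 \<le> (\<Sum>w\<in>level T b s. \<psi> s * (h s)\<^sup>2)" .
      have "ennreal (\<psi> s * g0 T b s) * ennreal ((h \<tau>)\<^sup>2) = ennreal (\<psi> s * g0 T b s * (h \<tau>)^2)"
        by (rule ennreal_mult[symmetric]) (use \<psi>n s0 g0_pos[of s] in auto)
      also have "\<dots> \<le> ennreal (\<Sum>w\<in>level T b s. \<psi> s * (h s)\<^sup>2)" using le by (rule ennreal_leI)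
      finally show ?thesis using True s0 by simp
    qed simp
  qed
  finally show ?thesis .
qed

end

lemma le_eps:
  fixes x C A :: real
  assumes H: "\<And>e. 0 < e \<Longrightarrow> x \<le> C + A * e" and A: "0 \<le> A"
  shows "x \<le> C"
proof (rule ccontr)
  assume "\<not> x \<le> C"
  then have d: "0 < x - C" by simp
  define e where "e = (x - C) / (A + 1)"
  have e: "0 < e" unfolding e_def using d A by simp
  have "A * e < x - C"
  proof -
    have "A * e = A * (x - C) / (A + 1)" unfolding e_def by simp
    also have "\<dots> < x - C" using d A by (simp add: field_simps)
    finally show ?thesis .
  qed
  then show False using H[OF e] by simp
qed

context rtree
begin

lemma lower:
  fixes \<psi> :: "real \<Rightarrow> real" and C \<tau> :: real
  assumes \<psi>m: "\<psi> \<in> borel_measurable (restrict_space borel {0<..})"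
    and \<psi>n: "\<forall>s>0. 0 \<le> \<psi> s" and H: "hardy_ineq T b \<psi> (ennreal C)" and C0: "0 \<le> C" and \<tau>: "0 < \<tau>"
  shows "(\<integral>\<^sup>+s\<in>{0<..\<tau>}. ennreal (\<psi> s * g0 T b s) \<partial>lborel) * (\<integral>\<^sup>+s\<in>{\<tau><..}. ennreal (1 / g0 T b s) \<partial>lborel) \<le> ennreal C"
proof -
  obtain j where jt: "t j < \<tau>" "\<tau> \<le> t (Suc j)" using edge_ex \<tau> by blast
  define P where "P = (\<integral>\<^sup>+s\<in>{0<..\<tau>}. ennreal (\<psi> s * g0 T b s) \<partial>lborel)"
  have \<psi>m': "(\<lambda>s. ennreal (\<psi> s * g0 T b s) * indicator {0<..\<tau>} s) \<in> borel_measurable lborel"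
  proof -
    have "(\<lambda>x. indicator {0<..} x *\<^sub>R \<psi> x) \<in> borel_measurable borel"
      using \<psi>m by (subst (asm) borel_measurable_restrict_space_iff) auto
    then have m: "(\<lambda>x. indicator {0<..} x * \<psi> x) \<in> borel_measurable borel" by simp
    have "(\<lambda>s. ennreal (indicator {0<..} s * \<psi> s * g0 T b s) * indicator {0<..\<tau>} s) \<in> borel_measurable lborel"
      using m by measurable
    moreover have "(\<lambda>s. ennreal (indicator {0<..} s * \<psi> s * g0 T b s) * indicator {0<..\<tau>} s) = (\<lambda>s. ennreal (\<psi> s * g0 T b s) * indicator {0<..\<tau>} s)"
      by (auto simp: indicator_def fun_eq_iff)
    ultimately show ?thesis by simp
  qed
  have key: "P * ennreal ((htest j K \<nu> \<tau> \<tau>)^2) \<le> ennreal (C * htest j K \<nu> \<tau> 0)"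
    if K: "Suc (Suc j) \<le> K" and \<nu>: "0 < \<nu>" for K \<nu>
  proof -
    have LT: "ltest T b j K \<nu> \<tau>"
      by (intro ltest.intro rtree_axioms ltest_axioms.intro jt K \<nu>)
    have "P * ennreal ((htest j K \<nu> \<tau> \<tau>)^2) \<le> tree_int T b (\<lambda>s w. \<psi> s * (htest j K \<nu> \<tau> s)^2)"
      unfolding P_def by (rule ltest.lhs_bound[OF LT \<psi>n \<psi>m'])
    also have "\<dots> \<le> ennreal C * tree_int T b (\<lambda>s w. (deriv (\<lambda>r. htest j K \<nu> \<tau> r) s)^2)"
      using H h_C0[OF jt K \<nu>] unfolding hardy_ineq_def by blast
    also have "\<dots> \<le> ennreal C * ennreal (htest j K \<nu> \<tau> 0)"
      by (intro mult_left_mono ltest.energy[OF LT]) simp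
    also have "\<dots> = ennreal (C * htest j K \<nu> \<tau> 0)"
    proof -
      have "0 < htest j K \<nu> \<tau> \<tau>" by (rule h_tau_pos[OF jt K \<nu>])
      moreover have "htest j K \<nu> \<tau> \<tau> \<le> htest j K \<nu> \<tau> 0" using h_ge_tau[OF jt K \<nu>] \<tau> by simp
      ultimately show ?thesis using C0 by (simp add: ennreal_mult)
    qed
    finally show ?thesis .
  qed
  obtain p where p: "P = ennreal p" "0 \<le> p"
  proof (cases P)
    case (real r) then show ?thesis using that by simp
  next
    case top
    have hp: "0 < htest j (Suc (Suc j)) 1 \<tau> \<tau>" by (rule h_tau_pos[OF jt order_refl]) simp
    have "P * ennreal ((htest j (Suc (Suc j)) 1 \<tau> \<tau>)^2) \<le> ennreal (C * htest j (Suc (Suc j)) 1 \<tau> 0)"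
      by (rule key) simp_all
    then show ?thesis using top hp by (simp add: ennreal_top_mult top_unique)
  qed
  have step: "p * (Vf \<tau> - Vf (t K)) \<le> C" if K: "Suc (Suc j) \<le> K" for K
  proof -
    define W where "W = Vf (t (Suc j)) - Vf (t K)"
    have W: "0 < W" unfolding W_def by (rule W_pos[OF jt K zero_less_one])
    show ?thesis
    proof (rule le_eps[where A = "(p + C / W) * ln 2"])
      show "0 \<le> (p + C / W) * ln 2" using p W C0 by simp
      fix e :: real assume e: "0 < e"
      define \<nu> where "\<nu> = 1 / e"
      have \<nu>: "0 < \<nu>" unfolding \<nu>_def using e by simp
      define x where "x = htest j K \<nu> \<tau> \<tau>"
      define y where "y = htest j K \<nu> \<tau> 0"
      have xW: "W \<le> x" unfolding x_def W_def by (rule h_tau_ge_W[OF jt K \<nu>])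
      have xp: "0 < x" using xW W by simp
      have y: "y \<le> x + ln 2 / \<nu>" unfolding x_def y_def by (rule h0_bound[OF jt K \<nu>])
      have xl: "Vf \<tau> - Vf (t K) - ln 2 / \<nu> \<le> x" unfolding x_def by (rule h_tau_lower[OF jt K \<nu>])
      have "ennreal (p * x^2) \<le> ennreal (C * y)"
        using key[OF K \<nu>] p unfolding x_def y_def by (simp add: ennreal_mult[symmetric])
      have y0: "0 \<le> y" unfolding y_def using h_ge_tau[OF jt K \<nu>, of 0] \<tau> xp unfolding x_def by simp
      have Cy: "0 \<le> C * y" using C0 y0 by simp
      then have k1: "p * x^2 \<le> C * y" using \<open>ennreal (p * x^2) \<le> ennreal (C * y)\<close> by (simp add: ennreal_le_iff)
      have k2: "p * x^2 \<le> C * (x + ln 2 / \<nu>)" using k1 y C0 by (meson mult_left_mono order.trans)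
      have "p * x = (p * x^2) / x" using xp by (simp add: power2_eq_square)
      also have "\<dots> \<le> (C * (x + ln 2 / \<nu>)) / x" using k2 xp by (intro divide_right_mono) auto
      also have "\<dots> = C + C * (ln 2 / \<nu>) / x" using xp by (simp add: distrib_left add_divide_distrib)
      also have "C * (ln 2 / \<nu>) / x \<le> C * (ln 2 / \<nu>) / W"
        using xW W C0 \<nu> by (intro divide_left_mono mult_nonneg_nonneg) auto
      finally have px: "p * x \<le> C + C * (ln 2 / \<nu>) / W" by simp
      have "p * (Vf \<tau> - Vf (t K)) \<le> p * (x + ln 2 / \<nu>)" using xl p by (intro mult_left_mono) auto
      also have "\<dots> = p * x + p * (ln 2 / \<nu>)" by (simp add: algebra_simps)
      also have "\<dots> \<le> C + C * (ln 2 / \<nu>) / W + p * (ln 2 / \<nu>)" using px by simp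
      also have "\<dots> = C + (p + C / W) * ln 2 * e" unfolding \<nu>_def by (simp add: field_simps)
      finally show "p * (Vf \<tau> - Vf (t K)) \<le> C + (p + C / W) * ln 2 * e" .
    qed
  qed
  have "p * Vf \<tau> \<le> C"
  proof (rule le_eps[where A = p])
    show "0 \<le> p" by (rule p(2))
    fix e :: real assume e: "0 < e"
    obtain R where R: "\<And>x. x \<ge> R \<Longrightarrow> Vf x < e" using V_tends[OF e] by blast
    obtain N where N: "R < t N" using t_unbounded by blast
    define K where "K = max N (Suc (Suc j))"
    have K: "Suc (Suc j) \<le> K" unfolding K_def by simp
    have "t N \<le> t K" unfolding K_def by (simp add: t_le_iff)
    then have VK: "Vf (t K) < e" using R N by simp
    have "p * Vf \<tau> = p * (Vf \<tau> - Vf (t K)) + p * Vf (t K)" by (simp add: algebra_simps)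
    also have "\<dots> \<le> C + p * e" using step[OF K] VK p(2) by (intro add_mono mult_left_mono) auto
    finally show "p * Vf \<tau> \<le> C + p * e" .
  qed
  moreover have "(\<integral>\<^sup>+s\<in>{\<tau><..}. ennreal (1 / g0 T b s) \<partial>lborel) = ennreal (Vf \<tau>)" using V_eq \<tau> by simp
  ultimately show ?thesis unfolding P_def[symmetric] using p by (simp add: ennreal_mult[symmetric] ennreal_leI)
qed

end

theorem theorem2p1:
  fixes T :: "nat \<Rightarrow> ereal" and b :: "nat \<Rightarrow> nat" and \<psi> :: "real \<Rightarrow> real"
  assumes "reg_tree T b"
    and "(SUP k. T k) = \<infinity>"
    and "(\<integral>\<^sup>+ s\<in>{0<..}. ennreal (1 / g0 T b s) \<partial>lborel) < \<infinity>"
    and "\<psi> \<in> borel_measurable (restrict_space borel {0<..})"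
    and "\<forall>s>0. 0 \<le> \<psi> s"
  shows "((\<exists>C::real. hardy_ineq T b \<psi> (ennreal C)) \<longleftrightarrow> Mconst T b \<psi> < \<infinity>)
       \<and> Mconst T b \<psi> \<le> sharp_const T b \<psi>
       \<and> sharp_const T b \<psi> \<le> 4 * Mconst T b \<psi>"
proof -
  have RT: "rtree T b" by (rule rtree.intro) (rule assms(1), rule assms(2), rule assms(3))
  interpret rtree T b by (rule RT)
  have A: "Mconst T b \<psi> \<le> ennreal C" if H: "hardy_ineq T b \<psi> (ennreal C)" for C
  proof -
    define C' where "C' = max C 0"
    have eC: "ennreal C' = ennreal C" unfolding C'_def by (cases "0 \<le> C") (auto simp: ennreal_neg max_def)
    have H': "hardy_ineq T b \<psi> (ennreal C')" using H eC by simp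
    show ?thesis unfolding Mconst_def eC[symmetric]
    proof (rule SUP_least)
      fix \<tau> :: real assume "\<tau> \<in> {0<..}"
      then show "(\<integral>\<^sup>+s\<in>{0<..\<tau>}. ennreal (\<psi> s * g0 T b s) \<partial>lborel) * (\<integral>\<^sup>+s\<in>{\<tau><..}. ennreal (1 / g0 T b s) \<partial>lborel) \<le> ennreal C'"
        using lower[OF assms(4) assms(5) H'] unfolding C'_def by simp
    qed
  qed
  have B: "hardy_ineq T b \<psi> (ennreal (4 * m))" if M: "Mconst T b \<psi> = ennreal m" "0 \<le> m" for m
    unfolding hardy_ineq_def
  proof (intro allI impI)
    fix u assume u: "C0inf T b u"
    have RU: "rtree_u T b u" by (rule rtree_u.intro[OF RT]) (rule rtree_u_axioms.intro[OF u])
    interpret rtree_u T b u by (rule RU)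
    show "tree_int T b (\<lambda>s w. \<psi> s * (u s w)\<^sup>2) \<le> ennreal (4 * m) * tree_int T b (\<lambda>s w. (deriv (\<lambda>r. u r w) s)\<^sup>2)"
      by (rule upper[OF assms(4) assms(5) M])
  qed
  have iff: "(\<exists>C::real. hardy_ineq T b \<psi> (ennreal C)) \<longleftrightarrow> Mconst T b \<psi> < \<infinity>"
  proof
    assume "\<exists>C::real. hardy_ineq T b \<psi> (ennreal C)"
    then obtain C where "hardy_ineq T b \<psi> (ennreal C)" by blast
    then have "Mconst T b \<psi> \<le> ennreal C" by (rule A)
    then show "Mconst T b \<psi> < \<infinity>" by (simp add: le_less_trans)
  next
    assume "Mconst T b \<psi> < \<infinity>"
    then obtain m where "Mconst T b \<psi> = ennreal m" "0 \<le> m" by (cases "Mconst T b \<psi>") auto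
    then show "\<exists>C::real. hardy_ineq T b \<psi> (ennreal C)" using B by blast
  qed
  have lo: "Mconst T b \<psi> \<le> sharp_const T b \<psi>"
    unfolding sharp_const_def
  proof (rule Inf_greatest)
    fix C assume "C \<in> {C. hardy_ineq T b \<psi> C}"
    then have H: "hardy_ineq T b \<psi> C" by simp
    show "Mconst T b \<psi> \<le> C"
    proof (cases C)
      case (real c) then show ?thesis using A H by simp
    next
      case top then show ?thesis by simp
    qed
  qed
  have up: "sharp_const T b \<psi> \<le> 4 * Mconst T b \<psi>"
  proof (cases "Mconst T b \<psi>")
    case (real m)
    then have "hardy_ineq T b \<psi> (ennreal (4 * m))" using B by simp
    then have "ennreal (4 * m) \<in> {C. hardy_ineq T b \<psi> C}" by simp
    then have "sharp_const T b \<psi> \<le> ennreal (4 * m)" unfolding sharp_const_def by (rule Inf_lower)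
    also have "ennreal (4 * m) = 4 * Mconst T b \<psi>" using real by (simp add: ennreal_mult)
    finally show ?thesis .
  next
    case top then show ?thesis by (simp add: ennreal_mult_top)
  qed
  show ?thesis using iff lo up by blast
qed

end
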